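(* Let $\mathcal{C}$ be an Abelian category and $\mathcal{F},\mathcal{G}$ classes of objects of $\mathcal{C}$ closed under extensions. Let $m\in\mathbb{Z}$, $C$ an object of $\mathcal{C}$ and let $S=0\to D^{m+1}(C)\to Z\to X\to0$ and $S'=0\to Y\to Z\to D^m(C)\to0$ be short exact sequences in $\mathrm{Ch}(\mathcal{C})$. Then: (1) $S$ is $\mathrm{Hom}(\mathrm{dw}\widetilde{\mathcal{F}},-)$-exact if and only if it is $\mathrm{Hom}(\widetilde{\mathcal{F}},-)$-exact; (2) $S$ is $\mathrm{Hom}(-,\mathrm{dw}\widetilde{\mathcal{G}})$-exact if and only if it is $\mathrm{Hom}(-,\widetilde{\mathcal{G}})$-exact; (3) $S'$ is $\mathrm{Hom}(\mathrm{dw}\widetilde{\mathcal{F}},-)$-exact if and only if it is $\mathrm{Hom}(\widetilde{\mathcal{F}},-)$-exact; (4) $S'$ is $\mathrm{Hom}(-,\mathrm{dw}\widetilde{\mathcal{G}})$-exact if and only if it is $\mathrm{Hom}(-,\widetilde{\mathcal{G}})$-exact.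
   Context: $\mathrm{Ch}(\mathcal{C})$ is the category of chain complexes $X=(X_m,\partial^X_m)_{m\in\mathbb{Z}}$ over $\mathcal{C}$; $Z_m(X)=\ker\partial^X_m$. $D^m(C)$ has $C$ in degrees $m$ and $m-1$, zero elsewhere, with $\partial_m=\mathrm{id}_C$ and other differentials zero. For a class $\mathcal{F}$ of objects of $\mathcal{C}$: $\widetilde{\mathcal{F}}$ is the class of exact complexes $X$ with $Z_m(X)\in\mathcal{F}$ for all $m$, and $\mathrm{dw}\widetilde{\mathcal{F}}$ the class of complexes with $X_m\in\mathcal{F}$ for all $m$. $\mathcal{F}$ is closed under extensions if in any short exact sequence $0\to F'\to F\to F''\to0$ with $F',F''\in\mathcal{F}$ also $F\in\mathcal{F}$. For a class $\mathcal{H}$ of complexes, a sequence $S$ of complexes is $\mathrm{Hom}(\mathcal{H},-)$-exact (resp. $\mathrm{Hom}(-,\mathcal{H})$-exact) if $\mathrm{Hom}_{\mathrm{Ch}(\mathcal{C})}(H,S)$ (resp. $\mathrm{Hom}_{\mathrm{Ch}(\mathcal{C})}(S,H)$) is an exact sequence of Abelian groups for all $H\in\mathcal{H}$. *)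

theory Defs
  imports Main
begin

record ('o, 'm) abcat =
  Ob    :: "'o set"
  Hm    :: "'o \<Rightarrow> 'o \<Rightarrow> 'm set"
  cp    :: "'m \<Rightarrow> 'm \<Rightarrow> 'm"      (* cp g f = g \<circ> f *)
  ident :: "'o \<Rightarrow> 'm"
  ad    :: "'m \<Rightarrow> 'm \<Rightarrow> 'm"
  zr    :: "'o \<Rightarrow> 'o \<Rightarrow> 'm"
  ng    :: "'m \<Rightarrow> 'm"

definition is_category :: "('o,'m) abcat \<Rightarrow> bool" where
  "is_category C \<longleftrightarrow>
     (\<forall>A\<in>Ob C. ident C A \<in> Hm C A A) \<and>
     (\<forall>A\<in>Ob C. \<forall>B\<in>Ob C. \<forall>D\<in>Ob C. \<forall>f\<in>Hm C A B. \<forall>g\<in>Hm C B D.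
        cp C g f \<in> Hm C A D) \<and>
     (\<forall>A\<in>Ob C. \<forall>B\<in>Ob C. \<forall>D\<in>Ob C. \<forall>E\<in>Ob C. \<forall>f\<in>Hm C A B. \<forall>g\<in>Hm C B D. \<forall>h\<in>Hm C D E.
        cp C h (cp C g f) = cp C (cp C h g) f) \<and>
     (\<forall>A\<in>Ob C. \<forall>B\<in>Ob C. \<forall>f\<in>Hm C A B. cp C (ident C B) f = f \<and> cp C f (ident C A) = f)"

definition is_preadditive :: "('o,'m) abcat \<Rightarrow> bool" where
  "is_preadditive C \<longleftrightarrow>
     (\<forall>A\<in>Ob C. \<forall>B\<in>Ob C.
        zr C A B \<in> Hm C A B \<and>
        (\<forall>f\<in>Hm C A B. \<forall>g\<in>Hm C A B. ad C f g \<in> Hm C A B) \<and>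
        (\<forall>f\<in>Hm C A B. ng C f \<in> Hm C A B) \<and>
        (\<forall>f\<in>Hm C A B. \<forall>g\<in>Hm C A B. \<forall>h\<in>Hm C A B. ad C (ad C f g) h = ad C f (ad C g h)) \<and>
        (\<forall>f\<in>Hm C A B. \<forall>g\<in>Hm C A B. ad C f g = ad C g f) \<and>
        (\<forall>f\<in>Hm C A B. ad C f (zr C A B) = f) \<and>
        (\<forall>f\<in>Hm C A B. ad C f (ng C f) = zr C A B)) \<and>
     (\<forall>A\<in>Ob C. \<forall>B\<in>Ob C. \<forall>D\<in>Ob C. \<forall>f\<in>Hm C A B. \<forall>f'\<in>Hm C A B. \<forall>g\<in>Hm C B D. \<forall>g'\<in>Hm C B D.
        cp C g (ad C f f') = ad C (cp C g f) (cp C g f') \<and>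
        cp C (ad C g g') f = ad C (cp C g f) (cp C g' f))"

definition zero_object :: "('o,'m) abcat \<Rightarrow> 'o \<Rightarrow> bool" where
  "zero_object C Z \<longleftrightarrow> Z \<in> Ob C \<and>
     (\<forall>A\<in>Ob C. Hm C Z A = {zr C Z A} \<and> Hm C A Z = {zr C A Z})"

definition has_biproducts :: "('o,'m) abcat \<Rightarrow> bool" where
  "has_biproducts C \<longleftrightarrow> (\<forall>A\<in>Ob C. \<forall>B\<in>Ob C. \<exists>P i1 i2 p1 p2.
     P \<in> Ob C \<and> i1 \<in> Hm C A P \<and> i2 \<in> Hm C B P \<and> p1 \<in> Hm C P A \<and> p2 \<in> Hm C P B \<and>
     cp C p1 i1 = ident C A \<and> cp C p2 i2 = ident C B \<and>
     cp C p2 i1 = zr C A B \<and> cp C p1 i2 = zr C B A \<and>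
     ad C (cp C i1 p1) (cp C i2 p2) = ident C P)"

definition is_kernel :: "('o,'m) abcat \<Rightarrow> 'o \<Rightarrow> 'o \<Rightarrow> 'm \<Rightarrow> 'o \<Rightarrow> 'm \<Rightarrow> bool" where
  "is_kernel C A B f K k \<longleftrightarrow> K \<in> Ob C \<and> k \<in> Hm C K A \<and> cp C f k = zr C K B \<and>
     (\<forall>X\<in>Ob C. \<forall>h\<in>Hm C X A. cp C f h = zr C X B \<longrightarrow>
        (\<exists>!u. u \<in> Hm C X K \<and> cp C k u = h))"

definition is_cokernel :: "('o,'m) abcat \<Rightarrow> 'o \<Rightarrow> 'o \<Rightarrow> 'm \<Rightarrow> 'o \<Rightarrow> 'm \<Rightarrow> bool" where
  "is_cokernel C A B f Q q \<longleftrightarrow> Q \<in> Ob C \<and> q \<in> Hm C B Q \<and> cp C q f = zr C A Q \<and>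
     (\<forall>X\<in>Ob C. \<forall>h\<in>Hm C B X. cp C h f = zr C A X \<longrightarrow>
        (\<exists>!u. u \<in> Hm C Q X \<and> cp C u q = h))"

definition is_mono :: "('o,'m) abcat \<Rightarrow> 'o \<Rightarrow> 'o \<Rightarrow> 'm \<Rightarrow> bool" where
  "is_mono C A B f \<longleftrightarrow> f \<in> Hm C A B \<and>
     (\<forall>X\<in>Ob C. \<forall>g\<in>Hm C X A. \<forall>h\<in>Hm C X A. cp C f g = cp C f h \<longrightarrow> g = h)"

definition is_epi :: "('o,'m) abcat \<Rightarrow> 'o \<Rightarrow> 'o \<Rightarrow> 'm \<Rightarrow> bool" where
  "is_epi C A B f \<longleftrightarrow> f \<in> Hm C A B \<and>
     (\<forall>X\<in>Ob C. \<forall>g\<in>Hm C B X. \<forall>h\<in>Hm C B X. cp C g f = cp C h f \<longrightarrow> g = h)"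

definition abelian :: "('o,'m) abcat \<Rightarrow> bool" where
  "abelian C \<longleftrightarrow> is_category C \<and> is_preadditive C \<and> (\<exists>Z. zero_object C Z) \<and>
     has_biproducts C \<and>
     (\<forall>A\<in>Ob C. \<forall>B\<in>Ob C. \<forall>f\<in>Hm C A B. \<exists>K k. is_kernel C A B f K k) \<and>
     (\<forall>A\<in>Ob C. \<forall>B\<in>Ob C. \<forall>f\<in>Hm C A B. \<exists>Q q. is_cokernel C A B f Q q) \<and>
     (\<forall>A\<in>Ob C. \<forall>B\<in>Ob C. \<forall>f\<in>Hm C A B. is_mono C A B f \<longrightarrow>
        (\<exists>D g. D \<in> Ob C \<and> g \<in> Hm C B D \<and> is_kernel C B D g A f)) \<and>
     (\<forall>A\<in>Ob C. \<forall>B\<in>Ob C. \<forall>f\<in>Hm C A B. is_epi C A B f \<longrightarrow>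
        (\<exists>D h. D \<in> Ob C \<and> h \<in> Hm C D A \<and> is_cokernel C D A h B f))"

definition short_exact :: "('o,'m) abcat \<Rightarrow> 'o \<Rightarrow> 'o \<Rightarrow> 'o \<Rightarrow> 'm \<Rightarrow> 'm \<Rightarrow> bool" where
  "short_exact C A B D f g \<longleftrightarrow> B \<in> Ob C \<and> f \<in> Hm C A B \<and> g \<in> Hm C B D \<and>
     is_kernel C B D g A f \<and> is_cokernel C A B f D g"

text \<open>Exactness of A \<rightarrow> B \<rightarrow> D at B (ker g \<subseteq> im f, element-free form)\<close>
definition exact_at :: "('o,'m) abcat \<Rightarrow> 'o \<Rightarrow> 'o \<Rightarrow> 'o \<Rightarrow> 'm \<Rightarrow> 'm \<Rightarrow> bool" where
  "exact_at C A B D f g \<longleftrightarrow> f \<in> Hm C A B \<and> g \<in> Hm C B D \<and> cp C g f = zr C A D \<and>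
     (\<forall>X\<in>Ob C. \<forall>h\<in>Hm C X B. cp C g h = zr C X D \<longrightarrow>
        (\<forall>Y\<in>Ob C. \<forall>c\<in>Hm C B Y. cp C c f = zr C A Y \<longrightarrow> cp C c h = zr C X Y))"

definition closed_ext :: "('o,'m) abcat \<Rightarrow> 'o set \<Rightarrow> bool" where
  "closed_ext C \<F> \<longleftrightarrow> (\<forall>A B D f g. A \<in> \<F> \<longrightarrow> D \<in> \<F> \<longrightarrow> short_exact C A B D f g \<longrightarrow> B \<in> \<F>)"

text \<open>A complex is a pair (objects X_n, differentials d_n : X_n \<rightarrow> X_(n-1)).\<close>
type_synonym ('o, 'm) cx = "(int \<Rightarrow> 'o) \<times> (int \<Rightarrow> 'm)"

definition is_complex :: "('o,'m) abcat \<Rightarrow> ('o,'m) cx \<Rightarrow> bool" where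
  "is_complex C X \<longleftrightarrow> (\<forall>n. fst X n \<in> Ob C \<and> snd X n \<in> Hm C (fst X n) (fst X (n - 1)) \<and>
     cp C (snd X (n - 1)) (snd X n) = zr C (fst X n) (fst X (n - 2)))"

definition chain_map :: "('o,'m) abcat \<Rightarrow> ('o,'m) cx \<Rightarrow> ('o,'m) cx \<Rightarrow> (int \<Rightarrow> 'm) \<Rightarrow> bool" where
  "chain_map C X Y f \<longleftrightarrow> (\<forall>n. f n \<in> Hm C (fst X n) (fst Y n) \<and>
     cp C (snd Y n) (f n) = cp C (f (n - 1)) (snd X n))"

definition chom :: "('o,'m) abcat \<Rightarrow> ('o,'m) cx \<Rightarrow> ('o,'m) cx \<Rightarrow> (int \<Rightarrow> 'm) set" where
  "chom C X Y = {f. chain_map C X Y f}"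

definition czero :: "('o,'m) abcat \<Rightarrow> ('o,'m) cx \<Rightarrow> ('o,'m) cx \<Rightarrow> int \<Rightarrow> 'm" where
  "czero C X Y = (\<lambda>n. zr C (fst X n) (fst Y n))"

definition ccomp :: "('o,'m) abcat \<Rightarrow> (int \<Rightarrow> 'm) \<Rightarrow> (int \<Rightarrow> 'm) \<Rightarrow> int \<Rightarrow> 'm" where
  "ccomp C g f = (\<lambda>n. cp C (g n) (f n))"

text \<open>Short exact sequences in Ch(C): degreewise short exact (kernels/cokernels in Ch(C)
  are computed degreewise).\<close>
definition ses_ch :: "('o,'m) abcat \<Rightarrow> ('o,'m) cx \<Rightarrow> ('o,'m) cx \<Rightarrow> ('o,'m) cx \<Rightarrow>
    (int \<Rightarrow> 'm) \<Rightarrow> (int \<Rightarrow> 'm) \<Rightarrow> bool" where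
  "ses_ch C A B D f g \<longleftrightarrow> is_complex C A \<and> is_complex C B \<and> is_complex C D \<and>
     chain_map C A B f \<and> chain_map C B D g \<and>
     (\<forall>n. short_exact C (fst A n) (fst B n) (fst D n) (f n) (g n))"

text \<open>Hom(H, S) exact for S = 0 \<rightarrow> A \<rightarrow> B \<rightarrow> D \<rightarrow> 0:
  0 \<rightarrow> Hom(H,A) \<rightarrow> Hom(H,B) \<rightarrow> Hom(H,D) \<rightarrow> 0 exact as abelian groups.\<close>
definition hom_exact_cov :: "('o,'m) abcat \<Rightarrow> ('o,'m) cx \<Rightarrow> ('o,'m) cx \<Rightarrow> ('o,'m) cx \<Rightarrow>
    ('o,'m) cx \<Rightarrow> (int \<Rightarrow> 'm) \<Rightarrow> (int \<Rightarrow> 'm) \<Rightarrow> bool" where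
  "hom_exact_cov C H A B D f g \<longleftrightarrow>
     {u \<in> chom C H A. ccomp C f u = czero C H B} = {czero C H A} \<and>
     {v \<in> chom C H B. ccomp C g v = czero C H D} = (\<lambda>u. ccomp C f u) ` chom C H A \<and>
     (\<lambda>v. ccomp C g v) ` chom C H B = chom C H D"

text \<open>Hom(S, H) exact: 0 \<rightarrow> Hom(D,H) \<rightarrow> Hom(B,H) \<rightarrow> Hom(A,H) \<rightarrow> 0 exact.\<close>
definition hom_exact_contra :: "('o,'m) abcat \<Rightarrow> ('o,'m) cx \<Rightarrow> ('o,'m) cx \<Rightarrow> ('o,'m) cx \<Rightarrow>
    ('o,'m) cx \<Rightarrow> (int \<Rightarrow> 'm) \<Rightarrow> (int \<Rightarrow> 'm) \<Rightarrow> bool" where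
  "hom_exact_contra C H A B D f g \<longleftrightarrow>
     {u \<in> chom C D H. ccomp C u g = czero C B H} = {czero C D H} \<and>
     {v \<in> chom C B H. ccomp C v f = czero C A H} = (\<lambda>u. ccomp C u g) ` chom C D H \<and>
     (\<lambda>v. ccomp C v f) ` chom C B H = chom C A H"

definition Hom_cov_exact :: "('o,'m) abcat \<Rightarrow> ('o,'m) cx set \<Rightarrow> ('o,'m) cx \<Rightarrow> ('o,'m) cx \<Rightarrow>
    ('o,'m) cx \<Rightarrow> (int \<Rightarrow> 'm) \<Rightarrow> (int \<Rightarrow> 'm) \<Rightarrow> bool" where
  "Hom_cov_exact C \<H> A B D f g \<longleftrightarrow> (\<forall>H\<in>\<H>. hom_exact_cov C H A B D f g)"

definition Hom_contra_exact :: "('o,'m) abcat \<Rightarrow> ('o,'m) cx set \<Rightarrow> ('o,'m) cx \<Rightarrow> ('o,'m) cx \<Rightarrow>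
    ('o,'m) cx \<Rightarrow> (int \<Rightarrow> 'm) \<Rightarrow> (int \<Rightarrow> 'm) \<Rightarrow> bool" where
  "Hom_contra_exact C \<H> A B D f g \<longleftrightarrow> (\<forall>H\<in>\<H>. hom_exact_contra C H A B D f g)"

definition exact_complex :: "('o,'m) abcat \<Rightarrow> ('o,'m) cx \<Rightarrow> bool" where
  "exact_complex C X \<longleftrightarrow> (\<forall>n. exact_at C (fst X (n + 1)) (fst X n) (fst X (n - 1))
                                    (snd X (n + 1)) (snd X n))"

text \<open>Z_n(X) \<in> \<F>: a kernel of d_n lies in \<F>.\<close>
definition tilde :: "('o,'m) abcat \<Rightarrow> 'o set \<Rightarrow> ('o,'m) cx set" where
  "tilde C \<F> = {X. is_complex C X \<and> exact_complex C X \<and>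
     (\<forall>n. \<exists>K k. is_kernel C (fst X n) (fst X (n - 1)) (snd X n) K k \<and> K \<in> \<F>)}"

definition dwtilde :: "('o,'m) abcat \<Rightarrow> 'o set \<Rightarrow> ('o,'m) cx set" where
  "dwtilde C \<F> = {X. is_complex C X \<and> (\<forall>n. fst X n \<in> \<F>)}"

definition zobj :: "('o,'m) abcat \<Rightarrow> 'o" where
  "zobj C = (SOME Z. zero_object C Z)"

definition disk :: "('o,'m) abcat \<Rightarrow> int \<Rightarrow> 'o \<Rightarrow> ('o,'m) cx" where
  "disk C m c =
     (let X = (\<lambda>n. if n = m \<or> n = m - 1 then c else zobj C)
      in (X, \<lambda>n. if n = m then ident C c else zr C (X n) (X (n - 1))))"

end

theory Submission
  imports Defs
begin


locale ab =
  fixes C :: "('o,'m) abcat"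
  assumes abel: "abelian C"
begin

lemma cat: "is_category C" and pre: "is_preadditive C"
  using abel unfolding abelian_def by auto

lemma idT: "A \<in> Ob C \<Longrightarrow> ident C A \<in> Hm C A A"
  using cat unfolding is_category_def by auto

lemma cpT: "\<lbrakk>A\<in>Ob C; B\<in>Ob C; D\<in>Ob C; f \<in> Hm C A B; g \<in> Hm C B D\<rbrakk> \<Longrightarrow> cp C g f \<in> Hm C A D"
  using cat unfolding is_category_def by blast

lemma assoc: "\<lbrakk>A\<in>Ob C; B\<in>Ob C; D\<in>Ob C; E\<in>Ob C; f \<in> Hm C A B; g \<in> Hm C B D; h \<in> Hm C D E\<rbrakk>
   \<Longrightarrow> cp C h (cp C g f) = cp C (cp C h g) f"
  using cat unfolding is_category_def by blast

lemma idL: "\<lbrakk>A\<in>Ob C; B\<in>Ob C; f \<in> Hm C A B\<rbrakk> \<Longrightarrow> cp C (ident C B) f = f"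
  using cat unfolding is_category_def by blast
lemma idR: "\<lbrakk>A\<in>Ob C; B\<in>Ob C; f \<in> Hm C A B\<rbrakk> \<Longrightarrow> cp C f (ident C A) = f"
  using cat unfolding is_category_def by blast

lemma zrT: "\<lbrakk>A\<in>Ob C; B\<in>Ob C\<rbrakk> \<Longrightarrow> zr C A B \<in> Hm C A B"
  using pre unfolding is_preadditive_def by blast
lemma adT: "\<lbrakk>A\<in>Ob C; B\<in>Ob C; f \<in> Hm C A B; g \<in> Hm C A B\<rbrakk> \<Longrightarrow> ad C f g \<in> Hm C A B"
  using pre unfolding is_preadditive_def by blast
lemma ngT: "\<lbrakk>A\<in>Ob C; B\<in>Ob C; f \<in> Hm C A B\<rbrakk> \<Longrightarrow> ng C f \<in> Hm C A B"
  using pre unfolding is_preadditive_def by blast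
lemma ad_assoc: "\<lbrakk>A\<in>Ob C; B\<in>Ob C; f \<in> Hm C A B; g \<in> Hm C A B; h \<in> Hm C A B\<rbrakk> \<Longrightarrow> ad C (ad C f g) h = ad C f (ad C g h)"
  using pre unfolding is_preadditive_def by blast
lemma ad_comm: "\<lbrakk>A\<in>Ob C; B\<in>Ob C; f \<in> Hm C A B; g \<in> Hm C A B\<rbrakk> \<Longrightarrow> ad C f g = ad C g f"
  using pre unfolding is_preadditive_def by blast
lemma ad_zr: "\<lbrakk>A\<in>Ob C; B\<in>Ob C; f \<in> Hm C A B\<rbrakk> \<Longrightarrow> ad C f (zr C A B) = f"
  using pre unfolding is_preadditive_def by blast
lemma zr_ad: "\<lbrakk>A\<in>Ob C; B\<in>Ob C; f \<in> Hm C A B\<rbrakk> \<Longrightarrow> ad C (zr C A B) f = f"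
  using ad_zr ad_comm zrT by metis
lemma ad_ng: "\<lbrakk>A\<in>Ob C; B\<in>Ob C; f \<in> Hm C A B\<rbrakk> \<Longrightarrow> ad C f (ng C f) = zr C A B"
  using pre unfolding is_preadditive_def by blast
lemma distL: "\<lbrakk>A\<in>Ob C; B\<in>Ob C; D\<in>Ob C; f \<in> Hm C A B; f' \<in> Hm C A B; g \<in> Hm C B D\<rbrakk>
   \<Longrightarrow> cp C g (ad C f f') = ad C (cp C g f) (cp C g f')"
  using pre unfolding is_preadditive_def by blast
lemma distR: "\<lbrakk>A\<in>Ob C; B\<in>Ob C; D\<in>Ob C; f \<in> Hm C A B; g \<in> Hm C B D; g' \<in> Hm C B D\<rbrakk>
   \<Longrightarrow> cp C (ad C g g') f = ad C (cp C g f) (cp C g' f)"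
  using pre unfolding is_preadditive_def by blast

lemma ad_cancel: "\<lbrakk>A\<in>Ob C; B\<in>Ob C; x \<in> Hm C A B; y \<in> Hm C A B; z \<in> Hm C A B; ad C x y = ad C x z\<rbrakk> \<Longrightarrow> y = z"
proof -
  assume a: "A\<in>Ob C" "B\<in>Ob C" "x \<in> Hm C A B" "y \<in> Hm C A B" "z \<in> Hm C A B" "ad C x y = ad C x z"
  have n: "ng C x \<in> Hm C A B" using a ngT by blast
  have e: "ad C (ng C x) x = zr C A B" using a ad_ng ad_comm n by metis
  have "y = ad C (ad C (ng C x) x) y" using e a zr_ad by simp
  also have "\<dots> = ad C (ng C x) (ad C x y)" using ad_assoc a n by blast
  also have "\<dots> = ad C (ng C x) (ad C x z)" using a by simp
  also have "\<dots> = ad C (ad C (ng C x) x) z" using ad_assoc a n by metis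
  also have "\<dots> = z" using e a zr_ad by simp
  finally show ?thesis .
qed

lemma zero_double: "\<lbrakk>A\<in>Ob C; B\<in>Ob C; y \<in> Hm C A B; ad C y y = y\<rbrakk> \<Longrightarrow> y = zr C A B"
  using ad_cancel[of A B y y "zr C A B"] ad_zr zrT by metis

lemma zr_right: "\<lbrakk>A\<in>Ob C; B\<in>Ob C; D\<in>Ob C; g \<in> Hm C B D\<rbrakk> \<Longrightarrow> cp C g (zr C A B) = zr C A D"
proof -
  assume a: "A\<in>Ob C" "B\<in>Ob C" "D\<in>Ob C" "g \<in> Hm C B D"
  have z: "zr C A B \<in> Hm C A B" using a zrT by blast
  have "cp C g (zr C A B) = cp C g (ad C (zr C A B) (zr C A B))" using ad_zr a z by simp
  also have "\<dots> = ad C (cp C g (zr C A B)) (cp C g (zr C A B))" using distL a z by blast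
  finally show ?thesis using zero_double[of A D "cp C g (zr C A B)"] a z cpT by metis
qed

lemma zr_left: "\<lbrakk>A\<in>Ob C; B\<in>Ob C; D\<in>Ob C; f \<in> Hm C A B\<rbrakk> \<Longrightarrow> cp C (zr C B D) f = zr C A D"
proof -
  assume a: "A\<in>Ob C" "B\<in>Ob C" "D\<in>Ob C" "f \<in> Hm C A B"
  have z: "zr C B D \<in> Hm C B D" using a zrT by blast
  have "cp C (zr C B D) f = cp C (ad C (zr C B D) (zr C B D)) f" using ad_zr a z by simp
  also have "\<dots> = ad C (cp C (zr C B D) f) (cp C (zr C B D) f)" using distR a z by blast
  finally show ?thesis using zero_double[of A D "cp C (zr C B D) f"] a z cpT by metis
qed

lemma cp_ngR: "\<lbrakk>A\<in>Ob C; B\<in>Ob C; D\<in>Ob C; f \<in> Hm C A B; g \<in> Hm C B D\<rbrakk> \<Longrightarrow> cp C g (ng C f) = ng C (cp C g f)"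
proof -
  assume a: "A\<in>Ob C" "B\<in>Ob C" "D\<in>Ob C" "f \<in> Hm C A B" "g \<in> Hm C B D"
  have gf: "cp C g f \<in> Hm C A D" using a cpT by blast
  have n: "ng C f \<in> Hm C A B" using a ngT by blast
  have "ad C (cp C g f) (cp C g (ng C f)) = cp C g (ad C f (ng C f))" using distL a n by metis
  also have "\<dots> = zr C A D" using ad_ng zr_right a by simp
  also have "\<dots> = ad C (cp C g f) (ng C (cp C g f))" using ad_ng gf a by simp
  finally show ?thesis using ad_cancel a gf cpT n ngT by metis
qed

lemma cp_ngL: "\<lbrakk>A\<in>Ob C; B\<in>Ob C; D\<in>Ob C; f \<in> Hm C A B; g \<in> Hm C B D\<rbrakk> \<Longrightarrow> cp C (ng C g) f = ng C (cp C g f)"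
proof -
  assume a: "A\<in>Ob C" "B\<in>Ob C" "D\<in>Ob C" "f \<in> Hm C A B" "g \<in> Hm C B D"
  have gf: "cp C g f \<in> Hm C A D" using a cpT by blast
  have n: "ng C g \<in> Hm C B D" using a ngT by blast
  have "ad C (cp C g f) (cp C (ng C g) f) = cp C (ad C g (ng C g)) f" using distR a n by metis
  also have "\<dots> = zr C A D" using ad_ng zr_left a by simp
  also have "\<dots> = ad C (cp C g f) (ng C (cp C g f))" using ad_ng gf a by simp
  finally show ?thesis using ad_cancel a gf cpT n ngT by metis
qed

lemma diff_zero: "\<lbrakk>A\<in>Ob C; B\<in>Ob C; x \<in> Hm C A B; y \<in> Hm C A B; ad C x (ng C y) = zr C A B\<rbrakk> \<Longrightarrow> x = y"
proof -
  assume a: "A\<in>Ob C" "B\<in>Ob C" "x \<in> Hm C A B" "y \<in> Hm C A B" "ad C x (ng C y) = zr C A B"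
  have n: "ng C y \<in> Hm C A B" using a ngT by blast
  have "x = ad C x (ad C y (ng C y))" using a ad_ng ad_zr by simp
  also have "\<dots> = ad C x (ad C (ng C y) y)" using ad_comm a n by metis
  also have "\<dots> = ad C (ad C x (ng C y)) y" using ad_assoc a n by metis
  also have "\<dots> = y" using a zr_ad by simp
  finally show ?thesis .
qed

lemma sub_cancel: "\<lbrakk>A\<in>Ob C; B\<in>Ob C; x \<in> Hm C A B; y \<in> Hm C A B\<rbrakk> \<Longrightarrow> ad C y (ad C x (ng C y)) = x"
proof -
  assume a: "A\<in>Ob C" "B\<in>Ob C" "x \<in> Hm C A B" "y \<in> Hm C A B"
  have n: "ng C y \<in> Hm C A B" using a ngT by blast
  have "ad C y (ad C x (ng C y)) = ad C y (ad C (ng C y) x)" using ad_comm a n by metis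
  also have "\<dots> = ad C (ad C y (ng C y)) x" using ad_assoc a n by metis
  also have "\<dots> = x" using a ad_ng zr_ad by simp
  finally show ?thesis .
qed

lemma diff_comp_zero: "\<lbrakk>A\<in>Ob C; B\<in>Ob C; D\<in>Ob C; x \<in> Hm C A B; y \<in> Hm C A B; g \<in> Hm C B D; cp C g x = cp C g y\<rbrakk>
  \<Longrightarrow> cp C g (ad C x (ng C y)) = zr C A D"
  by (simp add: distL ngT cp_ngR ad_ng cpT)

lemma diff_compR_zero: "\<lbrakk>A\<in>Ob C; B\<in>Ob C; D\<in>Ob C; x \<in> Hm C B D; y \<in> Hm C B D; f \<in> Hm C A B; cp C x f = cp C y f\<rbrakk>
  \<Longrightarrow> cp C (ad C x (ng C y)) f = zr C A D"
  by (simp add: distR ngT cp_ngL ad_ng cpT)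

end

context ab begin

lemma kernel_mono: "\<lbrakk>is_kernel C B D g A f; B\<in>Ob C; D\<in>Ob C; g \<in> Hm C B D\<rbrakk> \<Longrightarrow> is_mono C A B f"
  unfolding is_mono_def
proof (intro conjI ballI impI)
  assume k: "is_kernel C B D g A f" and o: "B\<in>Ob C" "D\<in>Ob C" "g \<in> Hm C B D"
  then show "f \<in> Hm C A B" unfolding is_kernel_def by blast
  fix X x y assume X: "X\<in>Ob C" and x: "x \<in> Hm C X A" and y: "y \<in> Hm C X A" and e: "cp C f x = cp C f y"
  have A: "A \<in> Ob C" and f: "f \<in> Hm C A B" and gf: "cp C g f = zr C A D" using k unfolding is_kernel_def by auto
  have "cp C g (cp C f x) = zr C X D" using assoc[OF X A o(1) o(2) x f o(3)] gf zr_left X A o x by simp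
  moreover have "cp C f x \<in> Hm C X B" using cpT X A o f x by blast
  ultimately have "\<exists>!u. u \<in> Hm C X A \<and> cp C f u = cp C f x" using k X unfolding is_kernel_def by blast
  then show "x = y" using x y e by metis
qed

lemma cokernel_epi: "\<lbrakk>is_cokernel C A B f D g; A\<in>Ob C; B\<in>Ob C; f \<in> Hm C A B\<rbrakk> \<Longrightarrow> is_epi C B D g"
  unfolding is_epi_def
proof (intro conjI ballI impI)
  assume k: "is_cokernel C A B f D g" and o: "A\<in>Ob C" "B\<in>Ob C" "f \<in> Hm C A B"
  then show "g \<in> Hm C B D" unfolding is_cokernel_def by blast
  fix X x y assume X: "X\<in>Ob C" and x: "x \<in> Hm C D X" and y: "y \<in> Hm C D X" and e: "cp C x g = cp C y g"
  have D: "D \<in> Ob C" and g: "g \<in> Hm C B D" and gf: "cp C g f = zr C A D" using k unfolding is_cokernel_def by auto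
  have "cp C (cp C x g) f = zr C A X" using assoc[OF o(1) o(2) D X o(3) g x] gf zr_right X D o x by simp
  moreover have "cp C x g \<in> Hm C B X" using cpT X D o g x by blast
  ultimately have "\<exists>!u. u \<in> Hm C D X \<and> cp C u g = cp C x g" using k X unfolding is_cokernel_def by blast
  then show "x = y" using x y e by metis
qed

lemma monoD: "\<lbrakk>is_mono C A B f; X\<in>Ob C; x \<in> Hm C X A; y \<in> Hm C X A; cp C f x = cp C f y\<rbrakk> \<Longrightarrow> x = y"
  unfolding is_mono_def by blast
lemma epiD: "\<lbrakk>is_epi C B D g; X\<in>Ob C; x \<in> Hm C D X; y \<in> Hm C D X; cp C x g = cp C y g\<rbrakk> \<Longrightarrow> x = y"
  unfolding is_epi_def by blast

lemma kernel_factor: "\<lbrakk>is_kernel C B D g A f; X\<in>Ob C; h \<in> Hm C X B; cp C g h = zr C X D\<rbrakk> \<Longrightarrow> \<exists>u\<in>Hm C X A. cp C f u = h"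
  unfolding is_kernel_def by blast
lemma cokernel_factor: "\<lbrakk>is_cokernel C A B f D g; X\<in>Ob C; h \<in> Hm C B X; cp C h f = zr C A X\<rbrakk> \<Longrightarrow> \<exists>u\<in>Hm C D X. cp C u g = h"
  unfolding is_cokernel_def by blast

lemma zobj: "zero_object C (zobj C)"
proof -
  have "\<exists>Z. zero_object C Z" using abel unfolding abelian_def by blast
  then show ?thesis unfolding zobj_def by (rule someI_ex)
qed
lemma zobjOb: "zobj C \<in> Ob C" using zobj unfolding zero_object_def by blast
lemma zobj_from: "A \<in> Ob C \<Longrightarrow> Hm C (zobj C) A = {zr C (zobj C) A}" using zobj unfolding zero_object_def by blast
lemma zobj_to: "A \<in> Ob C \<Longrightarrow> Hm C A (zobj C) = {zr C A (zobj C)}" using zobj unfolding zero_object_def by blast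

lemma ses_objs: "short_exact C A B D f g \<Longrightarrow> A \<in> Ob C \<and> B \<in> Ob C \<and> D \<in> Ob C \<and> f \<in> Hm C A B \<and> g \<in> Hm C B D"
  unfolding short_exact_def is_kernel_def is_cokernel_def by blast

lemma ses_mono: "short_exact C A B D f g \<Longrightarrow> is_mono C A B f"
  using kernel_mono ses_objs unfolding short_exact_def by blast
lemma ses_epi: "short_exact C A B D f g \<Longrightarrow> is_epi C B D g"
  using cokernel_epi ses_objs unfolding short_exact_def by blast
lemma ses_gf: "short_exact C A B D f g \<Longrightarrow> cp C g f = zr C A D"
  unfolding short_exact_def is_kernel_def by blast

lemma ses_iso_f: assumes s: "short_exact C A B (zobj C) f g"
  shows "\<exists>v\<in>Hm C B A. cp C v f = ident C A \<and> cp C f v = ident C B"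
proof -
  have o: "A \<in> Ob C" "B \<in> Ob C" "f \<in> Hm C A B" "g \<in> Hm C B (zobj C)" using ses_objs[OF s] by auto
  have "cp C g (ident C B) \<in> Hm C B (zobj C)" using cpT o idT zobjOb by blast
  then have "cp C g (ident C B) = zr C B (zobj C)" using zobj_to o by blast
  then obtain v where v: "v \<in> Hm C B A" "cp C f v = ident C B"
    using s idT o unfolding short_exact_def is_kernel_def by blast
  have "cp C f (cp C v f) = cp C f (ident C A)"
    using assoc[OF o(1) o(2) o(1) o(2) o(3) v(1) o(3)] v idL idR o by simp
  then have "cp C v f = ident C A" using monoD[OF ses_mono[OF s] o(1)] cpT o v idT by blast
  then show ?thesis using v by blast
qed

lemma ses_iso_g: assumes s: "short_exact C (zobj C) B D f g"
  shows "\<exists>v\<in>Hm C D B. cp C v g = ident C B \<and> cp C g v = ident C D"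
proof -
  have o: "D \<in> Ob C" "B \<in> Ob C" "f \<in> Hm C (zobj C) B" "g \<in> Hm C B D" using ses_objs[OF s] by auto
  have "cp C (ident C B) f \<in> Hm C (zobj C) B" using cpT o idT zobjOb by blast
  then have "cp C (ident C B) f = zr C (zobj C) B" using zobj_from o by blast
  then obtain v where v: "v \<in> Hm C D B" "cp C v g = ident C B"
    using s idT o unfolding short_exact_def is_cokernel_def by blast
  have "cp C (cp C g v) g = cp C (ident C D) g"
    using assoc[OF o(2) o(1) o(2) o(1) o(4) v(1) o(4)] v idL idR o by simp
  then have "cp C g v = ident C D" using epiD[OF ses_epi[OF s] o(1)] cpT o v idT by blast
  then show ?thesis using v by blast
qed

lemma cxOb: "is_complex C X \<Longrightarrow> fst X n \<in> Ob C" unfolding is_complex_def by blast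
lemma cxd: "is_complex C X \<Longrightarrow> snd X n \<in> Hm C (fst X n) (fst X (n - 1))" unfolding is_complex_def by blast
lemma cxdd: "is_complex C X \<Longrightarrow> cp C (snd X (n - 1)) (snd X n) = zr C (fst X n) (fst X (n - 2))" unfolding is_complex_def by blast
lemma cxdd': "is_complex C X \<Longrightarrow> cp C (snd X n) (snd X (n + 1)) = zr C (fst X (n+1)) (fst X (n - 1))"
  using cxdd[of X "n+1"] by simp

lemma cmT: "chain_map C X Y f \<Longrightarrow> f n \<in> Hm C (fst X n) (fst Y n)" unfolding chain_map_def by blast
lemma cmC: "chain_map C X Y f \<Longrightarrow> cp C (snd Y n) (f n) = cp C (f (n - 1)) (snd X n)" unfolding chain_map_def by blast

lemma chain_comp: assumes X: "is_complex C X" and Y: "is_complex C Y" and W: "is_complex C W"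
  and f: "chain_map C X Y f" and g: "chain_map C Y W g" shows "chain_map C X W (ccomp C g f)"
  unfolding chain_map_def ccomp_def
proof (intro allI conjI)
  fix n
  note o = cxOb[OF X] cxOb[OF Y] cxOb[OF W]
  show "cp C (g n) (f n) \<in> Hm C (fst X n) (fst W n)" using cpT o cmT f g by blast
  have "cp C (snd W n) (cp C (g n) (f n)) = cp C (cp C (snd W n) (g n)) (f n)"
    using assoc o cmT f g cxd W by blast
  also have "\<dots> = cp C (cp C (g (n-1)) (snd Y n)) (f n)" using cmC g by simp
  also have "\<dots> = cp C (g (n-1)) (cp C (snd Y n) (f n))"
    using assoc o cmT f g cxd Y by metis
  also have "\<dots> = cp C (g (n-1)) (cp C (f (n-1)) (snd X n))" using cmC f by simp
  also have "\<dots> = cp C (cp C (g (n-1)) (f (n-1))) (snd X n)"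
    using assoc o cmT f g cxd X by metis
  finally show "cp C (snd W n) (cp C (g n) (f n)) = cp C (cp C (g (n - 1)) (f (n - 1))) (snd X n)" .
qed

lemma czero_cm: assumes X: "is_complex C X" and Y: "is_complex C Y" shows "chain_map C X Y (czero C X Y)"
  unfolding chain_map_def czero_def
proof (intro allI conjI)
  fix n
  note o = cxOb[OF X] cxOb[OF Y]
  show "zr C (fst X n) (fst Y n) \<in> Hm C (fst X n) (fst Y n)" using zrT o by blast
  have "cp C (snd Y n) (zr C (fst X n) (fst Y n)) = zr C (fst X n) (fst Y (n-1))"
    using zr_right[OF o(1) o(2) o(2) cxd[OF Y]] by simp
  moreover have "cp C (zr C (fst X (n - 1)) (fst Y (n - 1))) (snd X n) = zr C (fst X n) (fst Y (n-1))"
    using zr_left[OF o(1) o(1) o(2) cxd[OF X]] by simp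
  ultimately show "cp C (snd Y n) (zr C (fst X n) (fst Y n)) = cp C (zr C (fst X (n - 1)) (fst Y (n - 1))) (snd X n)" by simp
qed

end

context ab begin

lemma ses_chD: assumes "ses_ch C A B D f g"
  shows "is_complex C A" "is_complex C B" "is_complex C D" "chain_map C A B f" "chain_map C B D g"
    "\<And>n. short_exact C (fst A n) (fst B n) (fst D n) (f n) (g n)"
  using assms unfolding ses_ch_def by auto

lemma cov_iff: assumes S: "ses_ch C A B D f g" and H: "is_complex C H"
  shows "hom_exact_cov C H A B D f g \<longleftrightarrow> (\<forall>\<phi>\<in>chom C H D. \<exists>\<psi>\<in>chom C H B. ccomp C g \<psi> = \<phi>)"
proof -
  note s = ses_chD[OF S]
  note oA = cxOb[OF s(1)] and oB = cxOb[OF s(2)] and oD = cxOb[OF s(3)] and oH = cxOb[OF H]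
  note fT = cmT[OF s(4)] and gT = cmT[OF s(5)]
  have e1: "{u \<in> chom C H A. ccomp C f u = czero C H B} = {czero C H A}"
  proof
    show "{czero C H A} \<subseteq> {u \<in> chom C H A. ccomp C f u = czero C H B}"
      using czero_cm[OF H s(1)] zr_right[OF oH oA oB fT] unfolding chom_def ccomp_def czero_def by auto
    show "{u \<in> chom C H A. ccomp C f u = czero C H B} \<subseteq> {czero C H A}"
    proof
      fix u assume u: "u \<in> {u \<in> chom C H A. ccomp C f u = czero C H B}"
      have "\<And>n. u n = zr C (fst H n) (fst A n)"
      proof -
        fix n
        have uT: "u n \<in> Hm C (fst H n) (fst A n)" using u cmT unfolding chom_def by blast
        have "cp C (f n) (u n) = cp C (f n) (zr C (fst H n) (fst A n))"
          using u zr_right[OF oH oA oB fT] unfolding ccomp_def czero_def by (metis (mono_tags, lifting) mem_Collect_eq)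
        then show "u n = zr C (fst H n) (fst A n)" using monoD[OF ses_mono[OF s(6)] oH uT zrT[OF oH oA]] by blast
      qed
      then show "u \<in> {czero C H A}" unfolding czero_def by auto
    qed
  qed
  have e2: "{v \<in> chom C H B. ccomp C g v = czero C H D} = (\<lambda>u. ccomp C f u) ` chom C H A"
  proof
    show "(\<lambda>u. ccomp C f u) ` chom C H A \<subseteq> {v \<in> chom C H B. ccomp C g v = czero C H D}"
    proof
      fix v assume "v \<in> (\<lambda>u. ccomp C f u) ` chom C H A"
      then obtain u where u: "u \<in> chom C H A" "v = ccomp C f u" by blast
      have "chain_map C H B v" using chain_comp[OF H s(1) s(2)] u s(4) unfolding chom_def by blast
      moreover have "ccomp C g v = czero C H D"
      proof
        fix n
        have uT: "u n \<in> Hm C (fst H n) (fst A n)" using u cmT unfolding chom_def by blast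
        have "cp C (g n) (cp C (f n) (u n)) = cp C (cp C (g n) (f n)) (u n)"
          by (rule assoc[OF oH oA oB oD uT fT gT])
        also have "\<dots> = zr C (fst H n) (fst D n)" using ses_gf[OF s(6)] zr_left oH oA oD uT by simp
        finally show "ccomp C g v n = czero C H D n" using u unfolding ccomp_def czero_def by simp
      qed
      ultimately show "v \<in> {v \<in> chom C H B. ccomp C g v = czero C H D}" unfolding chom_def by blast
    qed
    show "{v \<in> chom C H B. ccomp C g v = czero C H D} \<subseteq> (\<lambda>u. ccomp C f u) ` chom C H A"
    proof
      fix v assume v: "v \<in> {v \<in> chom C H B. ccomp C g v = czero C H D}"
      have vT: "\<And>n. v n \<in> Hm C (fst H n) (fst B n)" using v cmT unfolding chom_def by blast
      have ex: "\<And>n. \<exists>u\<in>Hm C (fst H n) (fst A n). cp C (f n) u = v n"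
      proof -
        fix n
        have "cp C (g n) (v n) = zr C (fst H n) (fst D n)" using v unfolding ccomp_def czero_def by (metis (mono_tags, lifting) mem_Collect_eq)
        then show "\<exists>u\<in>Hm C (fst H n) (fst A n). cp C (f n) u = v n"
          using kernel_factor[OF _ oH vT] s(6) unfolding short_exact_def by blast
      qed
      define u where "u = (\<lambda>n. SOME u. u \<in> Hm C (fst H n) (fst A n) \<and> cp C (f n) u = v n)"
      have uP: "\<And>n. u n \<in> Hm C (fst H n) (fst A n) \<and> cp C (f n) (u n) = v n"
        unfolding u_def by (rule someI_ex) (use ex in blast)
      have "chain_map C H A u" unfolding chain_map_def
      proof (intro allI conjI)
        fix n
        show "u n \<in> Hm C (fst H n) (fst A n)" using uP by blast
        have dA: "snd A n \<in> Hm C (fst A n) (fst A (n-1))" using cxd[OF s(1)] .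
        have dH: "snd H n \<in> Hm C (fst H n) (fst H (n-1))" using cxd[OF H] .
        have uT: "\<And>n. u n \<in> Hm C (fst H n) (fst A n)" using uP by blast
        have "cp C (f (n-1)) (cp C (snd A n) (u n)) = cp C (cp C (f (n-1)) (snd A n)) (u n)"
          by (rule assoc[OF oH oA oA oB uT dA fT])
        also have "\<dots> = cp C (cp C (snd B n) (f n)) (u n)" using cmC[OF s(4)] by simp
        also have "\<dots> = cp C (snd B n) (cp C (f n) (u n))" using assoc[OF oH oA oB oB uT fT cxd[OF s(2)]] by simp
        also have "\<dots> = cp C (snd B n) (v n)" using uP by simp
        also have "\<dots> = cp C (v (n-1)) (snd H n)" using v cmC unfolding chom_def by blast
        also have "\<dots> = cp C (cp C (f (n-1)) (u (n-1))) (snd H n)" using uP by simp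
        also have "\<dots> = cp C (f (n-1)) (cp C (u (n-1)) (snd H n))"
          using assoc[OF oH oH oA oB dH uT fT] by simp
        finally show "cp C (snd A n) (u n) = cp C (u (n - 1)) (snd H n)"
          using monoD[OF ses_mono[OF s(6)] oH] cpT oH oA uP dA dH by blast
      qed
      moreover have "v = ccomp C f u" unfolding ccomp_def using uP by auto
      ultimately show "v \<in> (\<lambda>u. ccomp C f u) ` chom C H A" unfolding chom_def by blast
    qed
  qed
  have e3: "(\<lambda>v. ccomp C g v) ` chom C H B \<subseteq> chom C H D"
    using chain_comp[OF H s(2) s(3) _ s(5)] unfolding chom_def by blast
  show ?thesis
  proof
    assume "hom_exact_cov C H A B D f g"
    then have "chom C H D \<subseteq> (\<lambda>v. ccomp C g v) ` chom C H B" unfolding hom_exact_cov_def by simp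
    then show "\<forall>\<phi>\<in>chom C H D. \<exists>\<psi>\<in>chom C H B. ccomp C g \<psi> = \<phi>" by (metis imageE subsetD)
  next
    assume "\<forall>\<phi>\<in>chom C H D. \<exists>\<psi>\<in>chom C H B. ccomp C g \<psi> = \<phi>"
    then have "chom C H D \<subseteq> (\<lambda>v. ccomp C g v) ` chom C H B" by (metis image_eqI subsetI)
    with e3 have "(\<lambda>v. ccomp C g v) ` chom C H B = chom C H D" by (rule subset_antisym)
    then show "hom_exact_cov C H A B D f g" unfolding hom_exact_cov_def using e1 e2 by simp
  qed
qed

lemma contra_iff: assumes S: "ses_ch C A B D f g" and H: "is_complex C H"
  shows "hom_exact_contra C H A B D f g \<longleftrightarrow> (\<forall>\<phi>\<in>chom C A H. \<exists>\<psi>\<in>chom C B H. ccomp C \<psi> f = \<phi>)"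
proof -
  note s = ses_chD[OF S]
  note oA = cxOb[OF s(1)] and oB = cxOb[OF s(2)] and oD = cxOb[OF s(3)] and oH = cxOb[OF H]
  note fT = cmT[OF s(4)] and gT = cmT[OF s(5)]
  have e1: "{u \<in> chom C D H. ccomp C u g = czero C B H} = {czero C D H}"
  proof
    show "{czero C D H} \<subseteq> {u \<in> chom C D H. ccomp C u g = czero C B H}"
      using czero_cm[OF s(3) H] zr_left[OF oB oD oH gT] unfolding chom_def ccomp_def czero_def by auto
    show "{u \<in> chom C D H. ccomp C u g = czero C B H} \<subseteq> {czero C D H}"
    proof
      fix u assume u: "u \<in> {u \<in> chom C D H. ccomp C u g = czero C B H}"
      have "\<And>n. u n = zr C (fst D n) (fst H n)"
      proof -
        fix n
        have uT: "u n \<in> Hm C (fst D n) (fst H n)" using u cmT unfolding chom_def by blast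
        have "cp C (u n) (g n) = cp C (zr C (fst D n) (fst H n)) (g n)"
          using u zr_left[OF oB oD oH gT] unfolding ccomp_def czero_def by (metis (mono_tags, lifting) mem_Collect_eq)
        then show "u n = zr C (fst D n) (fst H n)" using epiD[OF ses_epi[OF s(6)] oH uT zrT[OF oD oH]] by blast
      qed
      then show "u \<in> {czero C D H}" unfolding czero_def by auto
    qed
  qed
  have e2: "{v \<in> chom C B H. ccomp C v f = czero C A H} = (\<lambda>u. ccomp C u g) ` chom C D H"
  proof
    show "(\<lambda>u. ccomp C u g) ` chom C D H \<subseteq> {v \<in> chom C B H. ccomp C v f = czero C A H}"
    proof
      fix v assume "v \<in> (\<lambda>u. ccomp C u g) ` chom C D H"
      then obtain u where u: "u \<in> chom C D H" "v = ccomp C u g" by blast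
      have "chain_map C B H v" using chain_comp[OF s(2) s(3) H] u s(5) unfolding chom_def by blast
      moreover have "ccomp C v f = czero C A H"
      proof
        fix n
        have uT: "u n \<in> Hm C (fst D n) (fst H n)" using u cmT unfolding chom_def by blast
        have "cp C (cp C (u n) (g n)) (f n) = cp C (u n) (cp C (g n) (f n))"
          using assoc[OF oA oB oD oH fT gT uT] by simp
        also have "\<dots> = zr C (fst A n) (fst H n)" using ses_gf[OF s(6)] zr_right oH oA oD uT by simp
        finally show "ccomp C v f n = czero C A H n" using u unfolding ccomp_def czero_def by simp
      qed
      ultimately show "v \<in> {v \<in> chom C B H. ccomp C v f = czero C A H}" unfolding chom_def by blast
    qed
    show "{v \<in> chom C B H. ccomp C v f = czero C A H} \<subseteq> (\<lambda>u. ccomp C u g) ` chom C D H"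
    proof
      fix v assume v: "v \<in> {v \<in> chom C B H. ccomp C v f = czero C A H}"
      have vT: "\<And>n. v n \<in> Hm C (fst B n) (fst H n)" using v cmT unfolding chom_def by blast
      have ex: "\<And>n. \<exists>u\<in>Hm C (fst D n) (fst H n). cp C u (g n) = v n"
      proof -
        fix n
        have "cp C (v n) (f n) = zr C (fst A n) (fst H n)" using v unfolding ccomp_def czero_def by (metis (mono_tags, lifting) mem_Collect_eq)
        then show "\<exists>u\<in>Hm C (fst D n) (fst H n). cp C u (g n) = v n"
          using cokernel_factor[OF _ oH vT] s(6) unfolding short_exact_def by blast
      qed
      define u where "u = (\<lambda>n. SOME u. u \<in> Hm C (fst D n) (fst H n) \<and> cp C u (g n) = v n)"
      have uP: "\<And>n. u n \<in> Hm C (fst D n) (fst H n) \<and> cp C (u n) (g n) = v n"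
        unfolding u_def by (rule someI_ex) (use ex in blast)
      have "chain_map C D H u" unfolding chain_map_def
      proof (intro allI conjI)
        fix n
        show "u n \<in> Hm C (fst D n) (fst H n)" using uP by blast
        have dD: "snd D n \<in> Hm C (fst D n) (fst D (n-1))" using cxd[OF s(3)] .
        have dH: "snd H n \<in> Hm C (fst H n) (fst H (n-1))" using cxd[OF H] .
        have dB: "snd B n \<in> Hm C (fst B n) (fst B (n-1))" using cxd[OF s(2)] .
        have uT: "\<And>n. u n \<in> Hm C (fst D n) (fst H n)" using uP by blast
        have "cp C (cp C (snd H n) (u n)) (g n) = cp C (snd H n) (cp C (u n) (g n))"
          using assoc[OF oB oD oH oH gT uT dH] by simp
        also have "\<dots> = cp C (snd H n) (v n)" using uP by simp
        also have "\<dots> = cp C (v (n-1)) (snd B n)" using v cmC unfolding chom_def by blast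
        also have "\<dots> = cp C (cp C (u (n-1)) (g (n-1))) (snd B n)" using uP by simp
        also have "\<dots> = cp C (u (n-1)) (cp C (g (n-1)) (snd B n))"
          using assoc[OF oB oB oD oH dB gT uT] by simp
        also have "\<dots> = cp C (u (n-1)) (cp C (snd D n) (g n))" using cmC[OF s(5)] by simp
        also have "\<dots> = cp C (cp C (u (n-1)) (snd D n)) (g n)"
          using assoc[OF oB oD oD oH gT dD uT] by simp
        finally show "cp C (snd H n) (u n) = cp C (u (n - 1)) (snd D n)"
          using epiD[OF ses_epi[OF s(6)] oH] cpT oH oD uP dD dH by blast
      qed
      moreover have "v = ccomp C u g" unfolding ccomp_def using uP by auto
      ultimately show "v \<in> (\<lambda>u. ccomp C u g) ` chom C D H" unfolding chom_def by blast
    qed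
  qed
  have e3: "(\<lambda>v. ccomp C v f) ` chom C B H \<subseteq> chom C A H"
    using chain_comp[OF s(1) s(2) H s(4)] unfolding chom_def by blast
  show ?thesis
  proof
    assume "hom_exact_contra C H A B D f g"
    then have "chom C A H \<subseteq> (\<lambda>v. ccomp C v f) ` chom C B H" unfolding hom_exact_contra_def by simp
    then show "\<forall>\<phi>\<in>chom C A H. \<exists>\<psi>\<in>chom C B H. ccomp C \<psi> f = \<phi>" by (metis imageE subsetD)
  next
    assume "\<forall>\<phi>\<in>chom C A H. \<exists>\<psi>\<in>chom C B H. ccomp C \<psi> f = \<phi>"
    then have "chom C A H \<subseteq> (\<lambda>v. ccomp C v f) ` chom C B H" by (metis image_eqI subsetI)
    with e3 have "(\<lambda>v. ccomp C v f) ` chom C B H = chom C A H" by (rule subset_antisym)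
    then show "hom_exact_contra C H A B D f g" unfolding hom_exact_contra_def using e1 e2 by simp
  qed
qed

end

context ab begin

lemma ker_ex: "\<lbrakk>A\<in>Ob C; B\<in>Ob C; f\<in>Hm C A B\<rbrakk> \<Longrightarrow> \<exists>K k. is_kernel C A B f K k"
  using abel unfolding abelian_def by blast
lemma mono_ker: "\<lbrakk>A\<in>Ob C; B\<in>Ob C; f\<in>Hm C A B; is_mono C A B f\<rbrakk> \<Longrightarrow> \<exists>D g. D \<in> Ob C \<and> g \<in> Hm C B D \<and> is_kernel C B D g A f"
  using abel unfolding abelian_def by blast
lemma epi_coker: "\<lbrakk>A\<in>Ob C; B\<in>Ob C; f\<in>Hm C A B; is_epi C A B f\<rbrakk> \<Longrightarrow> \<exists>D h. D \<in> Ob C \<and> h \<in> Hm C D A \<and> is_cokernel C D A h B f"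
  using abel unfolding abelian_def by blast

lemma kerD: "is_kernel C A B f K k \<Longrightarrow> K \<in> Ob C \<and> k \<in> Hm C K A \<and> cp C f k = zr C K B"
  unfolding is_kernel_def by blast

lemma mono_comp: assumes o: "A\<in>Ob C" "B\<in>Ob C" "D\<in>Ob C" and m1: "is_mono C B D k" and m2: "is_mono C A B q"
  shows "is_mono C A D (cp C k q)"
  unfolding is_mono_def
proof (intro conjI ballI impI)
  have k: "k \<in> Hm C B D" and q: "q \<in> Hm C A B" using m1 m2 unfolding is_mono_def by auto
  then show "cp C k q \<in> Hm C A D" using cpT o by blast
  fix X x y assume X: "X \<in> Ob C" and x: "x \<in> Hm C X A" and y: "y \<in> Hm C X A" and e: "cp C (cp C k q) x = cp C (cp C k q) y"
  have "cp C k (cp C q x) = cp C k (cp C q y)" using e assoc[OF X o x q k] assoc[OF X o y q k] by simp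
  then have "cp C q x = cp C q y" using monoD[OF m1 X] cpT X o x y q by blast
  then show "x = y" using monoD[OF m2 X x y] by blast
qed

lemma tilde_sub: assumes F: "\<F> \<subseteq> Ob C" and ce: "closed_ext C \<F>" and X: "X \<in> tilde C \<F>"
  shows "X \<in> dwtilde C \<F>"
proof -
  have cx: "is_complex C X" and ex: "exact_complex C X"
    and kk: "\<And>n. \<exists>K k. is_kernel C (fst X n) (fst X (n - 1)) (snd X n) K k \<and> K \<in> \<F>"
    using X unfolding tilde_def by auto
  have "fst X n \<in> \<F>" for n
  proof -
    define Xn where "Xn = fst X n"
    define X1 where "X1 = fst X (n-1)"
    define X2 where "X2 = fst X (n-2)"
    define d where "d = snd X n"
    define d' where "d' = snd X (n-1)"
    have oXn: "Xn \<in> Ob C" and oX1: "X1 \<in> Ob C" and oX2: "X2 \<in> Ob C"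
      unfolding Xn_def X1_def X2_def using cxOb[OF cx] by auto
    have dT: "d \<in> Hm C Xn X1" unfolding d_def Xn_def X1_def using cxd[OF cx] .
    have d'T: "d' \<in> Hm C X1 X2" unfolding d'_def X2_def X1_def using cxd[OF cx, of "n-1"] by (simp add: diff_diff_eq)
    have dd: "cp C d' d = zr C Xn X2" unfolding d'_def d_def Xn_def X2_def using cxdd[OF cx] .
    obtain K k where Kk: "is_kernel C Xn X1 d K k" "K \<in> \<F>" using kk[of n] unfolding Xn_def X1_def d_def by blast
    obtain K' k' where Kk': "is_kernel C X1 X2 d' K' k'" "K' \<in> \<F>" using kk[of "n-1"]
      unfolding X1_def X2_def d'_def by (auto simp add: diff_diff_eq)
    have oK: "K \<in> Ob C" and kT: "k \<in> Hm C K Xn" and dk: "cp C d k = zr C K X1" using kerD[OF Kk(1)] by auto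
    have oK': "K' \<in> Ob C" and k'T: "k' \<in> Hm C K' X1" and dk': "cp C d' k' = zr C K' X2" using kerD[OF Kk'(1)] by auto
    have mk: "is_mono C K Xn k" using kernel_mono[OF Kk(1) oXn oX1 dT] .
    have mk': "is_mono C K' X1 k'" using kernel_mono[OF Kk'(1) oX1 oX2 d'T] .
    obtain e where eT: "e \<in> Hm C Xn K'" and ke: "cp C k' e = d" using kernel_factor[OF Kk'(1) oXn dT dd] by blast
    have exn: "exact_at C Xn X1 X2 d d'"
    proof -
      have "exact_at C (fst X (n-1+1)) (fst X (n-1)) (fst X (n-1-1)) (snd X (n-1+1)) (snd X (n-1))"
        using ex unfolding exact_complex_def by blast
      moreover have "n - 1 + 1 = n" "n - 1 - 1 = n - 2" by auto
      ultimately show ?thesis unfolding Xn_def X1_def X2_def d_def d'_def by simp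
    qed
    have ek: "cp C e k = zr C K K'"
    proof -
      have "cp C k' (cp C e k) = cp C d k" using assoc[OF oK oXn oK' oX1 kT eT k'T] ke by simp
      also have "\<dots> = cp C k' (zr C K K')" using dk zr_right[OF oK oK' oX1 k'T] by simp
      finally show ?thesis using monoD[OF mk' oK] cpT[OF oK oXn oK' kT eT] zrT[OF oK oK'] by blast
    qed
    have dh: "\<And>W h. W \<in> Ob C \<Longrightarrow> h \<in> Hm C W Xn \<Longrightarrow> cp C e h = zr C W K' \<Longrightarrow> cp C d h = zr C W X1"
    proof -
      fix W h assume W: "W \<in> Ob C" and h: "h \<in> Hm C W Xn" and eh: "cp C e h = zr C W K'"
      have "cp C d h = cp C k' (cp C e h)" using assoc[OF W oXn oK' oX1 h eT k'T] ke by simp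
      then show "cp C d h = zr C W X1" using eh zr_right[OF W oK' oX1 k'T] by simp
    qed
    have kerE: "is_kernel C Xn K' e K k"
      unfolding is_kernel_def
    proof (intro conjI ballI impI)
      show "K \<in> Ob C" "k \<in> Hm C K Xn" "cp C e k = zr C K K'" using oK kT ek by auto
      fix W h assume W: "W \<in> Ob C" and h: "h \<in> Hm C W Xn" and eh: "cp C e h = zr C W K'"
      show "\<exists>!u. u \<in> Hm C W K \<and> cp C k u = h" using Kk(1) W h dh[OF W h eh] unfolding is_kernel_def by blast
    qed
    have epi: "is_epi C Xn K' e"
      unfolding is_epi_def
    proof (intro conjI ballI impI)
      show "e \<in> Hm C Xn K'" by (rule eT)
      fix W a b assume W: "W \<in> Ob C" and a: "a \<in> Hm C K' W" and b: "b \<in> Hm C K' W" and ab: "cp C a e = cp C b e"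
      define x where "x = ad C a (ng C b)"
      have xT: "x \<in> Hm C K' W" unfolding x_def using adT ngT oK' W a b by blast
      have xe: "cp C x e = zr C Xn W" unfolding x_def using diff_compR_zero[OF oXn oK' W a b eT ab] .
      obtain Kx \<kappa> where kx: "is_kernel C K' W x Kx \<kappa>" using ker_ex[OF oK' W xT] by blast
      have oKx: "Kx \<in> Ob C" and \<kappa>T: "\<kappa> \<in> Hm C Kx K'" and x\<kappa>: "cp C x \<kappa> = zr C Kx W" using kerD[OF kx] by auto
      obtain e' where e'T: "e' \<in> Hm C Xn Kx" and ke': "cp C \<kappa> e' = e" using kernel_factor[OF kx oXn eT xe] by blast
      have m\<kappa>: "is_mono C Kx K' \<kappa>" using kernel_mono[OF kx oK' W xT] .
      have mm: "is_mono C Kx X1 (cp C k' \<kappa>)" using mono_comp[OF oKx oK' oX1 mk' m\<kappa>] .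
      have mT: "cp C k' \<kappa> \<in> Hm C Kx X1" using cpT[OF oKx oK' oX1 \<kappa>T k'T] .
      obtain D g' where D: "D \<in> Ob C" and g'T: "g' \<in> Hm C X1 D" and gk: "is_kernel C X1 D g' Kx (cp C k' \<kappa>)"
        using mono_ker[OF oKx oX1 mT mm] by blast
      have gm: "cp C g' (cp C k' \<kappa>) = zr C Kx D" using kerD[OF gk] by blast
      have "cp C g' d = cp C g' (cp C (cp C k' \<kappa>) e')"
        using ke ke' assoc[OF oXn oKx oK' oX1 e'T \<kappa>T k'T] by simp
      also have "\<dots> = cp C (cp C g' (cp C k' \<kappa>)) e'" using assoc[OF oXn oKx oX1 D e'T mT g'T] .
      also have "\<dots> = zr C Xn D" using gm zr_left[OF oXn oKx D e'T] by simp
      finally have gd: "cp C g' d = zr C Xn D" .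
      have gk': "cp C g' k' = zr C K' D"
        using exn k'T dk' gd D g'T oK' unfolding exact_at_def by blast
      obtain j where jT: "j \<in> Hm C K' Kx" and mj: "cp C (cp C k' \<kappa>) j = k'"
        using kernel_factor[OF gk oK' k'T gk'] by blast
      have "cp C k' (cp C \<kappa> j) = cp C k' (ident C K')"
        using assoc[OF oK' oKx oK' oX1 jT \<kappa>T k'T] mj idR[OF oK' oX1 k'T] by simp
      then have kj: "cp C \<kappa> j = ident C K'" using monoD[OF mk' oK'] cpT[OF oK' oKx oK' jT \<kappa>T] idT[OF oK'] by blast
      have "x = cp C x (cp C \<kappa> j)" using kj idR[OF oK' W xT] by simp
      also have "\<dots> = cp C (cp C x \<kappa>) j" using assoc[OF oK' oKx oK' W jT \<kappa>T xT] .
      also have "\<dots> = zr C K' W" using x\<kappa> zr_left[OF oK' oKx W jT] by simp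
      finally have "x = zr C K' W" .
      then show "a = b" using diff_zero[OF oK' W a b] unfolding x_def by blast
    qed
    obtain D0 h0 where D0: "D0 \<in> Ob C" and h0T: "h0 \<in> Hm C D0 Xn" and ck0: "is_cokernel C D0 Xn h0 K' e"
      using epi_coker[OF oXn oK' eT epi] by blast
    have cokE: "is_cokernel C K Xn k K' e"
      unfolding is_cokernel_def
    proof (intro conjI ballI impI)
      show "K' \<in> Ob C" "e \<in> Hm C Xn K'" "cp C e k = zr C K K'" using oK' eT ek by auto
      fix W h assume W: "W \<in> Ob C" and h: "h \<in> Hm C Xn W" and hk: "cp C h k = zr C K W"
      have eh0: "cp C e h0 = zr C D0 K'" using ck0 unfolding is_cokernel_def by blast
      obtain t where tT: "t \<in> Hm C D0 K" and kt: "cp C k t = h0"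
        using kernel_factor[OF Kk(1) D0 h0T dh[OF D0 h0T eh0]] by blast
      have "cp C h h0 = cp C (cp C h k) t" using kt assoc[OF D0 oK oXn W tT kT h] by simp
      also have "\<dots> = zr C D0 W" using hk zr_left[OF D0 oK W tT] by simp
      finally have "cp C h h0 = zr C D0 W" .
      then show "\<exists>!u. u \<in> Hm C K' W \<and> cp C u e = h" using ck0 W h unfolding is_cokernel_def by blast
    qed
    have "short_exact C K Xn K' k e" unfolding short_exact_def using oXn kT eT kerE cokE by blast
    then show "fst X n \<in> \<F>" using ce Kk(2) Kk'(2) unfolding closed_ext_def Xn_def by blast
  qed
  then show ?thesis using cx unfolding dwtilde_def by blast
qed

end


definition isbip :: "('o,'m) abcat \<Rightarrow> 'o \<Rightarrow> 'o \<Rightarrow> 'm \<Rightarrow> 'm \<Rightarrow> 'm \<Rightarrow> 'm \<Rightarrow> bool" where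
  "isbip C A P i1 i2 p1 p2 \<longleftrightarrow> P \<in> Ob C \<and> i1 \<in> Hm C A P \<and> i2 \<in> Hm C A P \<and> p1 \<in> Hm C P A \<and> p2 \<in> Hm C P A \<and>
     cp C p1 i1 = ident C A \<and> cp C p2 i2 = ident C A \<and>
     cp C p2 i1 = zr C A A \<and> cp C p1 i2 = zr C A A \<and>
     ad C (cp C i1 p1) (cp C i2 p2) = ident C P"

definition Tcx :: "('o,'m) abcat \<Rightarrow> 'o \<Rightarrow> 'm \<Rightarrow> 'm \<Rightarrow> ('o,'m) cx" where
  "Tcx C P i2 p1 = ((\<lambda>n. P), (\<lambda>n. cp C i2 p1))"

context ab begin

lemma bip_ex: "A \<in> Ob C \<Longrightarrow> \<exists>P i1 i2 p1 p2. isbip C A P i1 i2 p1 p2"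
  using abel unfolding abelian_def has_biproducts_def isbip_def by blast

context
  fixes A P i1 i2 p1 p2
  assumes bp: "isbip C A P i1 i2 p1 p2" and oA: "A \<in> Ob C"
begin

lemma bpD: "P \<in> Ob C" "i1 \<in> Hm C A P" "i2 \<in> Hm C A P" "p1 \<in> Hm C P A" "p2 \<in> Hm C P A"
     "cp C p1 i1 = ident C A" "cp C p2 i2 = ident C A"
     "cp C p2 i1 = zr C A A" "cp C p1 i2 = zr C A A"
     "ad C (cp C i1 p1) (cp C i2 p2) = ident C P"
  using bp unfolding isbip_def by auto

lemmas oP = bpD(1)

lemma dT: "cp C i2 p1 \<in> Hm C P P" using cpT[OF oP oA oP bpD(4) bpD(3)] .

lemma p1d: "cp C p1 (cp C i2 p1) = zr C P A"
  using assoc[OF oP oA oP oA bpD(4) bpD(3) bpD(4)] bpD(9) zr_left[OF oP oA oA bpD(4)] by simp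
lemma p2d: "cp C p2 (cp C i2 p1) = p1"
  using assoc[OF oP oA oP oA bpD(4) bpD(3) bpD(5)] bpD(7) idL[OF oP oA bpD(4)] by simp
lemma di1: "cp C (cp C i2 p1) i1 = i2"
  using assoc[OF oA oP oA oP bpD(2) bpD(4) bpD(3)] bpD(6) idR[OF oA oP bpD(3)] by simp
lemma di2: "cp C (cp C i2 p1) i2 = zr C A P"
  using assoc[OF oA oP oA oP bpD(3) bpD(4) bpD(3)] bpD(9) zr_right[OF oA oA oP bpD(3)] by simp
lemma dd: "cp C (cp C i2 p1) (cp C i2 p1) = zr C P P"
  using assoc[OF oP oA oP oP bpD(4) bpD(3) dT] di2 zr_left[OF oP oA oP bpD(4)] by simp

lemma decompL: assumes W: "W \<in> Ob C" and h: "h \<in> Hm C W P"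
  shows "h = ad C (cp C i1 (cp C p1 h)) (cp C i2 (cp C p2 h))"
proof -
  have "h = cp C (ad C (cp C i1 p1) (cp C i2 p2)) h" using bpD(10) idL[OF W oP h] by simp
  also have "\<dots> = ad C (cp C (cp C i1 p1) h) (cp C (cp C i2 p2) h)"
    using distR[OF W oP oP h] cpT oP oA bpD by blast
  also have "\<dots> = ad C (cp C i1 (cp C p1 h)) (cp C i2 (cp C p2 h))"
    using assoc[OF W oP oA oP h bpD(4) bpD(2)] assoc[OF W oP oA oP h bpD(5) bpD(3)] by simp
  finally show ?thesis .
qed

lemma decompR: assumes W: "W \<in> Ob C" and c: "c \<in> Hm C P W"
  shows "c = ad C (cp C (cp C c i1) p1) (cp C (cp C c i2) p2)"
proof -
  have "c = cp C c (ad C (cp C i1 p1) (cp C i2 p2))" using bpD(10) idR[OF oP W c] by simp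
  also have "\<dots> = ad C (cp C c (cp C i1 p1)) (cp C c (cp C i2 p2))"
    using distL[OF oP oP W _ _ c] cpT oP oA bpD by blast
  also have "\<dots> = ad C (cp C (cp C c i1) p1) (cp C (cp C c i2) p2)"
    using assoc[OF oP oA oP W bpD(4) bpD(2) c] assoc[OF oP oA oP W bpD(5) bpD(3) c] by simp
  finally show ?thesis .
qed

lemma T_complex: "is_complex C (Tcx C P i2 p1)"
  unfolding is_complex_def Tcx_def using oP dT dd by simp

lemma T_exact: "exact_at C P P P (cp C i2 p1) (cp C i2 p1)"
  unfolding exact_at_def
proof (intro conjI ballI impI)
  show "cp C i2 p1 \<in> Hm C P P" "cp C i2 p1 \<in> Hm C P P" "cp C (cp C i2 p1) (cp C i2 p1) = zr C P P"
    using dT dd by auto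
  fix X h Y c assume X: "X \<in> Ob C" and h: "h \<in> Hm C X P" and dh: "cp C (cp C i2 p1) h = zr C X P"
    and Y: "Y \<in> Ob C" and c: "c \<in> Hm C P Y" and cd: "cp C c (cp C i2 p1) = zr C P Y"
  have p1h: "cp C p1 h = zr C X A"
  proof -
    have "cp C p1 h = cp C p2 (cp C (cp C i2 p1) h)"
      using assoc[OF X oP oP oA h dT bpD(5)] p2d by simp
    also have "\<dots> = zr C X A" using dh zr_right[OF X oP oA bpD(5)] by simp
    finally show ?thesis .
  qed
  have ci2: "cp C c i2 = zr C A Y"
  proof -
    have "cp C c i2 = cp C (cp C c (cp C i2 p1)) i1"
      using assoc[OF oA oP oP Y bpD(2) dT c] di1 by simp
    also have "\<dots> = zr C A Y" using cd zr_left[OF oA oP Y bpD(2)] by simp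
    finally show ?thesis .
  qed
  have ci1: "cp C c i1 \<in> Hm C A Y" using cpT[OF oA oP Y bpD(2) c] .
  have p2h: "cp C p2 h \<in> Hm C X A" using cpT[OF X oP oA h bpD(5)] .
  have "cp C c h = ad C (cp C c (cp C i1 (cp C p1 h))) (cp C c (cp C i2 (cp C p2 h)))"
    using decompL[OF X h] distL[OF X oP Y _ _ c] cpT[OF X oA oP _ bpD(2)] cpT[OF X oA oP p2h bpD(3)]
      cpT[OF X oP oA h bpD(4)] by metis
  also have "\<dots> = ad C (cp C (cp C c i1) (cp C p1 h)) (cp C (cp C c i2) (cp C p2 h))"
    using assoc[OF X oA oP Y _ bpD(2) c] cpT[OF X oP oA h bpD(4)] assoc[OF X oA oP Y p2h bpD(3) c] by simp
  also have "\<dots> = ad C (zr C X Y) (zr C X Y)"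
    using p1h ci2 zr_right[OF X oA Y ci1] zr_left[OF X oA Y p2h] by simp
  also have "\<dots> = zr C X Y" using ad_zr zrT X Y by blast
  finally show "cp C c h = zr C X Y" .
qed

lemma T_kernel: "is_kernel C P P (cp C i2 p1) A i2"
  unfolding is_kernel_def
proof (intro conjI ballI impI)
  show "A \<in> Ob C" "i2 \<in> Hm C A P" "cp C (cp C i2 p1) i2 = zr C A P" using oA bpD di2 by auto
  fix X h assume X: "X \<in> Ob C" and h: "h \<in> Hm C X P" and dh: "cp C (cp C i2 p1) h = zr C X P"
  have p1h: "cp C p1 h = zr C X A"
  proof -
    have "cp C p1 h = cp C p2 (cp C (cp C i2 p1) h)"
      using assoc[OF X oP oP oA h dT bpD(5)] p2d by simp
    also have "\<dots> = zr C X A" using dh zr_right[OF X oP oA bpD(5)] by simp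
    finally show ?thesis .
  qed
  have p2h: "cp C p2 h \<in> Hm C X A" using cpT[OF X oP oA h bpD(5)] .
  have "h = ad C (cp C i1 (zr C X A)) (cp C i2 (cp C p2 h))" using decompL[OF X h] p1h by simp
  also have "\<dots> = cp C i2 (cp C p2 h)" using zr_right[OF X oA oP bpD(2)] zr_ad[OF X oP] cpT[OF X oA oP p2h bpD(3)] by simp
  finally have hh: "cp C i2 (cp C p2 h) = h" by simp
  have mi2: "\<And>u v. u \<in> Hm C X A \<Longrightarrow> v \<in> Hm C X A \<Longrightarrow> cp C i2 u = cp C i2 v \<Longrightarrow> u = v"
  proof -
    fix u v assume u: "u \<in> Hm C X A" and v: "v \<in> Hm C X A" and e: "cp C i2 u = cp C i2 v"
    have "cp C (cp C p2 i2) u = cp C (cp C p2 i2) v" using e assoc[OF X oA oP oA u bpD(3) bpD(5)] assoc[OF X oA oP oA v bpD(3) bpD(5)] by simp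
    then show "u = v" using bpD(7) idL[OF X oA u] idL[OF X oA v] by simp
  qed
  show "\<exists>!u. u \<in> Hm C X A \<and> cp C i2 u = h" using hh p2h mi2 by blast
qed

lemma T_tilde: assumes "A \<in> \<F>" shows "Tcx C P i2 p1 \<in> tilde C \<F>"
  unfolding tilde_def exact_complex_def
  using T_complex T_exact T_kernel assms by (auto simp: Tcx_def)

lemma T_out: assumes W: "is_complex C W" and \<alpha>: "\<alpha> \<in> Hm C A (fst W k)"
  shows "chain_map C (Tcx C P i2 p1) W (\<lambda>n. if n = k then cp C \<alpha> p1 else if n = k - 1 then cp C (cp C (snd W k) \<alpha>) p2 else zr C P (fst W n))"
  (is "chain_map C _ W ?\<phi>")
  unfolding chain_map_def
proof (intro allI conjI)
  fix n
  note oW = cxOb[OF W] and dW = cxd[OF W]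
  have dWa: "cp C (snd W k) \<alpha> \<in> Hm C A (fst W (k-1))" using cpT[OF oA oW oW \<alpha> dW] .
  show "?\<phi> n \<in> Hm C (fst (Tcx C P i2 p1) n) (fst W n)"
    using cpT[OF oP oA oW bpD(4) \<alpha>] cpT[OF oP oA oW bpD(5) dWa] zrT[OF oP oW] by (auto simp: Tcx_def)
  show "cp C (snd W n) (?\<phi> n) = cp C (?\<phi> (n - 1)) (snd (Tcx C P i2 p1) n)"
  proof (cases "n = k")
    case True
    have "cp C (snd W k) (cp C \<alpha> p1) = cp C (cp C (snd W k) \<alpha>) p1" using assoc[OF oP oA oW oW bpD(4) \<alpha> dW] .
    also have "\<dots> = cp C (cp C (snd W k) \<alpha>) (cp C p2 (cp C i2 p1))" using p2d by simp
    also have "\<dots> = cp C (cp C (cp C (snd W k) \<alpha>) p2) (cp C i2 p1)" using assoc[OF oP oP oA oW dT bpD(5) dWa] .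
    finally show ?thesis using True by (simp add: Tcx_def)
  next
    case nk: False
    show ?thesis
    proof (cases "n = k + 1")
      case True
      then have n1: "n - 1 = k" by simp
      have "cp C (cp C \<alpha> p1) (cp C i2 p1) = cp C \<alpha> (cp C p1 (cp C i2 p1))" using assoc[OF oP oP oA oW dT bpD(4) \<alpha>] by simp
      also have "\<dots> = zr C P (fst W k)" using p1d zr_right[OF oP oA oW \<alpha>] by simp
      finally have r: "cp C (cp C \<alpha> p1) (cp C i2 p1) = zr C P (fst W k)" .
      have "cp C (snd W (k+1)) (zr C P (fst W (k+1))) = zr C P (fst W (k+1-1))" using zr_right[OF oP oW oW dW] .
      then show ?thesis unfolding True using r by (simp add: Tcx_def)
    next
      case nk1: False
      show ?thesis
      proof (cases "n = k - 1")
        case True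
        have "cp C (snd W n) (cp C (cp C (snd W k) \<alpha>) p2) = cp C (cp C (snd W n) (cp C (snd W k) \<alpha>)) p2"
          using assoc[OF oP oA oW oW bpD(5) _ dW] dWa True by simp
        also have "\<dots> = cp C (cp C (cp C (snd W (k-1)) (snd W k)) \<alpha>) p2"
          using assoc[OF oA oW oW oW \<alpha> dW dW] True by simp
        also have "\<dots> = zr C P (fst W (k-2))"
          using cxdd[OF W, of k] zr_left[OF oA oW oW \<alpha>] zr_left[OF oP oA oW bpD(5)] by simp
        finally have l: "cp C (snd W n) (cp C (cp C (snd W k) \<alpha>) p2) = zr C P (fst W (k-2))" .
        have "cp C (zr C P (fst W (n-1))) (cp C i2 p1) = zr C P (fst W (n-1))" using zr_left[OF oP oP oW dT] .
        moreover have "n - 1 = k - 2" "n - 1 \<noteq> k" "n - 1 \<noteq> k - 1" using True by auto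
        ultimately show ?thesis using nk True l by (simp add: Tcx_def)
      next
        case False
        have "n - 1 \<noteq> k" "n - 1 \<noteq> k - 1" using nk nk1 by auto
        then show ?thesis using nk False zr_right[OF oP oW oW dW] zr_left[OF oP oP oW dT] by (simp add: Tcx_def)
      qed
    qed
  qed
qed

lemma T_in: assumes W: "is_complex C W" and \<beta>: "\<beta> \<in> Hm C (fst W j) A"
  shows "chain_map C W (Tcx C P i2 p1) (\<lambda>n. if n = j + 1 then cp C (cp C i1 \<beta>) (snd W (j+1)) else if n = j then cp C i2 \<beta> else zr C (fst W n) P)"
  (is "chain_map C W _ ?\<psi>")
  unfolding chain_map_def
proof (intro allI conjI)
  fix n
  note oW = cxOb[OF W] and dW = cxd[OF W]
  have dW1: "snd W (j+1) \<in> Hm C (fst W (j+1)) (fst W j)" using dW[of "j+1"] by simp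
  have i1b: "cp C i1 \<beta> \<in> Hm C (fst W j) P" using cpT[OF oW oA oP \<beta> bpD(2)] .
  have i2b: "cp C i2 \<beta> \<in> Hm C (fst W j) P" using cpT[OF oW oA oP \<beta> bpD(3)] .
  have top: "cp C (cp C i1 \<beta>) (snd W (j+1)) \<in> Hm C (fst W (j+1)) P" using cpT[OF oW oW oP dW1 i1b] .
  show "?\<psi> n \<in> Hm C (fst W n) (fst (Tcx C P i2 p1) n)"
    using top i2b zrT[OF oW oP] by (auto simp: Tcx_def)
  show "cp C (snd (Tcx C P i2 p1) n) (?\<psi> n) = cp C (?\<psi> (n - 1)) (snd W n)"
  proof (cases "n = j + 1")
    case True
    then have n1: "n - 1 = j" "n - 1 \<noteq> j + 1" by auto
    have "cp C (cp C i2 p1) (cp C (cp C i1 \<beta>) (snd W (j+1))) = cp C (cp C (cp C i2 p1) (cp C i1 \<beta>)) (snd W (j+1))"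
      using assoc[OF oW oW oP oP dW1 i1b dT] .
    also have "\<dots> = cp C (cp C (cp C (cp C i2 p1) i1) \<beta>) (snd W (j+1))"
      using assoc[OF oW oA oP oP \<beta> bpD(2) dT] by simp
    also have "\<dots> = cp C (cp C i2 \<beta>) (snd W (j+1))" using di1 by simp
    finally show ?thesis unfolding True by (simp add: Tcx_def)
  next
    case nj1: False
    show ?thesis
    proof (cases "n = j")
      case True
      have "cp C (cp C i2 p1) (cp C i2 \<beta>) = cp C (cp C (cp C i2 p1) i2) \<beta>" using assoc[OF oW oA oP oP \<beta> bpD(3) dT] .
      also have "\<dots> = zr C (fst W j) P" using di2 zr_left[OF oW oA oP \<beta>] by simp
      finally have l: "cp C (cp C i2 p1) (cp C i2 \<beta>) = zr C (fst W j) P" .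
      have "n - 1 \<noteq> j + 1" "n - 1 \<noteq> j" using True by auto
      then show ?thesis using True nj1 l zr_left[OF oW oW oP dW] by (simp add: Tcx_def)
    next
      case nj: False
      show ?thesis
      proof (cases "n = j + 2")
        case True
        then have n1: "n - 1 = j + 1" by simp
        have dW2: "snd W n \<in> Hm C (fst W n) (fst W (j+1))" using dW[of n] n1 by simp
        have "cp C (cp C (cp C i1 \<beta>) (snd W (j+1))) (snd W n) = cp C (cp C i1 \<beta>) (cp C (snd W (j+1)) (snd W n))"
          using assoc[OF oW oW oW oP dW2 dW1 i1b] by simp
        also have "\<dots> = cp C (cp C i1 \<beta>) (zr C (fst W n) (fst W j))"
          using cxdd'[OF W, of "j+1"] True by (simp add: add.commute)
        also have "\<dots> = zr C (fst W n) P" using zr_right[OF oW oW oP i1b] .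
        finally have r: "cp C (cp C (cp C i1 \<beta>) (snd W (j+1))) (snd W n) = zr C (fst W n) P" .
        show ?thesis using nj1 nj n1 r zr_right[OF oW oP oP dT] by (simp add: Tcx_def)
      next
        case False
        have "n - 1 \<noteq> j + 1" "n - 1 \<noteq> j" using False nj1 nj by auto
        then show ?thesis using nj1 nj zr_right[OF oW oP oP dT] zr_left[OF oW oW oP dW] by (simp add: Tcx_def)
      qed
    qed
  qed
qed

end
end

context ab begin

lemma disk_fst: "fst (disk C k c) n = (if n = k \<or> n = k - 1 then c else zobj C)"
  unfolding disk_def Let_def by simp
lemma disk_snd: "snd (disk C k c) n = (if n = k then ident C c else zr C (fst (disk C k c) n) (fst (disk C k c) (n - 1)))"
  unfolding disk_def Let_def by simp

lemma sect_cancel: "\<lbrakk>A\<in>Ob C; B\<in>Ob C; W\<in>Ob C; v \<in> Hm C B A; g \<in> Hm C A B; cp C v g = ident C A;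
   x \<in> Hm C W A; y \<in> Hm C W A; cp C g x = cp C g y\<rbrakk> \<Longrightarrow> x = y"
proof -
  assume a: "A\<in>Ob C" "B\<in>Ob C" "W\<in>Ob C" "v \<in> Hm C B A" "g \<in> Hm C A B" "cp C v g = ident C A"
   "x \<in> Hm C W A" "y \<in> Hm C W A" "cp C g x = cp C g y"
  have "x = cp C (cp C v g) x" using a idL by simp
  also have "\<dots> = cp C v (cp C g x)" using assoc[OF a(3) a(1) a(2) a(1) a(7) a(5) a(4)] by simp
  also have "\<dots> = cp C (cp C v g) y" using a(9) assoc[OF a(3) a(1) a(2) a(1) a(8) a(5) a(4)] by simp
  finally show ?thesis using a idL by simp
qed

lemma retr_cancel: "\<lbrakk>A\<in>Ob C; B\<in>Ob C; W\<in>Ob C; v \<in> Hm C B A; g \<in> Hm C A B; cp C g v = ident C B;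
   x \<in> Hm C B W; y \<in> Hm C B W; cp C x g = cp C y g\<rbrakk> \<Longrightarrow> x = y"
proof -
  assume a: "A\<in>Ob C" "B\<in>Ob C" "W\<in>Ob C" "v \<in> Hm C B A" "g \<in> Hm C A B" "cp C g v = ident C B"
   "x \<in> Hm C B W" "y \<in> Hm C B W" "cp C x g = cp C y g"
  have "x = cp C x (cp C g v)" using a idR by simp
  also have "\<dots> = cp C (cp C x g) v" using assoc[OF a(2) a(1) a(2) a(3) a(4) a(5) a(7)] by simp
  also have "\<dots> = cp C y (cp C g v)" using a(9) assoc[OF a(2) a(1) a(2) a(3) a(4) a(5) a(8)] by simp
  finally show ?thesis using a idR by simp
qed

lemma kpair: assumes k: "is_kernel C B D g A f" and o: "A\<in>Ob C" "B\<in>Ob C" "D\<in>Ob C" "E\<in>Ob C" "W\<in>Ob C"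
  and gT: "g \<in> Hm C B D" and fT: "f \<in> Hm C A B" and rT: "r \<in> Hm C B E" and rm: "is_mono C A E (cp C r f)"
  and x: "x \<in> Hm C W B" and y: "y \<in> Hm C W B" and gxy: "cp C g x = cp C g y" and rxy: "cp C r x = cp C r y"
  shows "x = y"
proof -
  define \<delta> where "\<delta> = ad C x (ng C y)"
  have \<delta>T: "\<delta> \<in> Hm C W B" unfolding \<delta>_def using adT ngT o x y by blast
  have g\<delta>: "cp C g \<delta> = zr C W D" unfolding \<delta>_def using diff_comp_zero[OF o(5) o(2) o(3) x y gT gxy] .
  obtain \<epsilon> where \<epsilon>T: "\<epsilon> \<in> Hm C W A" and f\<epsilon>: "cp C f \<epsilon> = \<delta>" using kernel_factor[OF k o(5) \<delta>T g\<delta>] by blast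
  have "cp C (cp C r f) \<epsilon> = cp C r \<delta>" using assoc[OF o(5) o(1) o(2) o(4) \<epsilon>T fT rT] f\<epsilon> by simp
  also have "\<dots> = zr C W E" unfolding \<delta>_def using diff_comp_zero[OF o(5) o(2) o(4) x y rT rxy] .
  also have "\<dots> = cp C (cp C r f) (zr C W A)" using zr_right[OF o(5) o(1) o(4)] cpT[OF o(1) o(2) o(4) fT rT] by simp
  finally have "\<epsilon> = zr C W A" using monoD[OF rm o(5) \<epsilon>T zrT[OF o(5) o(1)]] by blast
  then have "\<delta> = zr C W B" using f\<epsilon> zr_right[OF o(5) o(1) o(2) fT] by simp
  then show ?thesis using diff_zero[OF o(5) o(2) x y] unfolding \<delta>_def by blast
qed

lemma kpair_co: assumes k: "is_cokernel C A B f D g" and o: "A\<in>Ob C" "B\<in>Ob C" "D\<in>Ob C" "E\<in>Ob C" "W\<in>Ob C"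
  and gT: "g \<in> Hm C B D" and fT: "f \<in> Hm C A B" and rT: "r \<in> Hm C E B" and re: "is_epi C E D (cp C g r)"
  and x: "x \<in> Hm C B W" and y: "y \<in> Hm C B W" and fxy: "cp C x f = cp C y f" and rxy: "cp C x r = cp C y r"
  shows "x = y"
proof -
  define \<delta> where "\<delta> = ad C x (ng C y)"
  have \<delta>T: "\<delta> \<in> Hm C B W" unfolding \<delta>_def using adT ngT o x y by blast
  have f\<delta>: "cp C \<delta> f = zr C A W" unfolding \<delta>_def using diff_compR_zero[OF o(1) o(2) o(5) x y fT fxy] .
  obtain \<epsilon> where \<epsilon>T: "\<epsilon> \<in> Hm C D W" and f\<epsilon>: "cp C \<epsilon> g = \<delta>" using cokernel_factor[OF k o(5) \<delta>T f\<delta>] by blast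
  have "cp C \<epsilon> (cp C g r) = cp C \<delta> r" using assoc[OF o(4) o(2) o(3) o(5) rT gT \<epsilon>T] f\<epsilon> by simp
  also have "\<dots> = zr C E W" unfolding \<delta>_def using diff_compR_zero[OF o(4) o(2) o(5) x y rT rxy] .
  also have "\<dots> = cp C (zr C D W) (cp C g r)" using zr_left[OF o(4) o(3) o(5)] cpT[OF o(4) o(2) o(3) rT gT] by simp
  finally have "\<epsilon> = zr C D W" using epiD[OF re o(5) \<epsilon>T zrT[OF o(3) o(5)]] by blast
  then have "\<delta> = zr C B W" using f\<epsilon> zr_left[OF o(2) o(3) o(5) gT] by simp
  then show ?thesis using diff_zero[OF o(2) o(5) x y] unfolding \<delta>_def by blast
qed

end

context ab begin

lemma part1:
  assumes F: "\<F> \<subseteq> Ob C" and c: "c \<in> Ob C"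
    and S: "ses_ch C (disk C (m + 1) c) Z X f g"
    and T: "\<forall>H\<in>tilde C \<F>. \<forall>\<phi>\<in>chom C H X. \<exists>\<psi>\<in>chom C H Z. ccomp C g \<psi> = \<phi>"
    and H: "H \<in> dwtilde C \<F>"
  shows "\<forall>\<phi>\<in>chom C H X. \<exists>\<psi>\<in>chom C H Z. ccomp C g \<psi> = \<phi>"
proof
  fix \<phi> assume \<phi>: "\<phi> \<in> chom C H X"
  let ?D = "disk C (m+1) c"
  note s = ses_chD[OF S]
  have hc: "is_complex C H" and hF: "\<And>n. fst H n \<in> \<F>" using H unfolding dwtilde_def by auto
  note oZ = cxOb[OF s(2)] and oX = cxOb[OF s(3)] and oH = cxOb[OF hc]
  note dZ = cxd[OF s(2)] and dX = cxd[OF s(3)] and dH = cxd[OF hc]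
  note fT = cmT[OF s(4)] and gT = cmT[OF s(5)]
  have \<phi>T: "\<And>n. \<phi> n \<in> Hm C (fst H n) (fst X n)" and \<phi>C: "\<And>n. cp C (snd X n) (\<phi> n) = cp C (\<phi> (n-1)) (snd H n)"
    using \<phi> unfolding chom_def chain_map_def by auto
  have D1: "fst ?D (m+1) = c" "fst ?D m = c" by (simp_all add: disk_fst)
  have Dz: "\<And>n. n \<noteq> m+1 \<Longrightarrow> n \<noteq> m \<Longrightarrow> fst ?D n = zobj C" by (simp add: disk_fst)
  have fm: "f m \<in> Hm C c (fst Z m)" using fT[of m] D1 by simp
  have fm1: "f (m+1) \<in> Hm C c (fst Z (m+1))" using fT[of "m+1"] D1 by simp
  have dZ1: "snd Z (m+1) \<in> Hm C (fst Z (m+1)) (fst Z m)" using dZ[of "m+1"] by simp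
  have dH1: "snd H (m+1) \<in> Hm C (fst H (m+1)) (fst H m)" using dH[of "m+1"] by simp
  have df: "cp C (snd Z (m+1)) (f (m+1)) = f m"
    using cmC[OF s(4), of "m+1"] idR[OF c oZ fm] by (simp add: disk_snd)
  have kerm: "is_kernel C (fst Z m) (fst X m) (g m) c (f m)" using s(6)[of m] D1 unfolding short_exact_def by simp
  have gf1: "cp C (g (m+1)) (f (m+1)) = zr C c (fst X (m+1))" using ses_gf[OF s(6)[of "m+1"]] D1 by simp
  have kerm1: "is_kernel C (fst Z (m+1)) (fst X (m+1)) (g (m+1)) c (f (m+1))" using s(6)[of "m+1"] D1 unfolding short_exact_def by simp
  have monofm: "is_mono C c (fst Z m) (f m)" using kernel_mono[OF kerm oZ oX gT] .
  have iso: "\<And>n. n \<noteq> m+1 \<Longrightarrow> n \<noteq> m \<Longrightarrow> \<exists>v\<in>Hm C (fst X n) (fst Z n). cp C v (g n) = ident C (fst Z n) \<and> cp C (g n) v = ident C (fst X n)"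
    using ses_iso_g s(6) Dz by metis
  define v where "v = (\<lambda>n. SOME v. v\<in>Hm C (fst X n) (fst Z n) \<and> cp C v (g n) = ident C (fst Z n) \<and> cp C (g n) v = ident C (fst X n))"
  have vP: "\<And>n. n \<noteq> m+1 \<Longrightarrow> n \<noteq> m \<Longrightarrow> v n \<in> Hm C (fst X n) (fst Z n) \<and> cp C (v n) (g n) = ident C (fst Z n) \<and> cp C (g n) (v n) = ident C (fst X n)"
    unfolding v_def by (rule someI_ex) (use iso in blast)
  have gv\<phi>: "\<And>n. n \<noteq> m+1 \<Longrightarrow> n \<noteq> m \<Longrightarrow> cp C (g n) (cp C (v n) (\<phi> n)) = \<phi> n"
    using vP assoc[OF oH oX oZ oX \<phi>T _ gT] idL[OF oH oX \<phi>T] by metis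
  have v\<phi>T: "\<And>n. n \<noteq> m+1 \<Longrightarrow> n \<noteq> m \<Longrightarrow> cp C (v n) (\<phi> n) \<in> Hm C (fst H n) (fst Z n)"
    using vP cpT[OF oH oX oZ \<phi>T] by blast
  have core: "\<And>n x. x \<in> Hm C (fst H n) (fst Z n) \<Longrightarrow> cp C (g n) x = \<phi> n \<Longrightarrow>
     cp C (g (n-1)) (cp C (snd Z n) x) = cp C (\<phi> (n-1)) (snd H n)"
  proof -
    fix n x assume x: "x \<in> Hm C (fst H n) (fst Z n)" and gx: "cp C (g n) x = \<phi> n"
    have "cp C (g (n-1)) (cp C (snd Z n) x) = cp C (cp C (g (n-1)) (snd Z n)) x" using assoc[OF oH oZ oZ oX x dZ gT] .
    also have "\<dots> = cp C (cp C (snd X n) (g n)) x" using cmC[OF s(5)] by simp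
    also have "\<dots> = cp C (snd X n) (\<phi> n)" using assoc[OF oH oZ oX oX x gT dX] gx by simp
    finally show "cp C (g (n-1)) (cp C (snd Z n) x) = cp C (\<phi> (n-1)) (snd H n)" using \<phi>C by simp
  qed
  have core2: "\<And>n y. y \<in> Hm C (fst H (n-1)) (fst Z (n-1)) \<Longrightarrow> cp C (g (n-1)) y = \<phi> (n-1) \<Longrightarrow>
     cp C (g (n-1)) (cp C y (snd H n)) = cp C (\<phi> (n-1)) (snd H n)"
    using assoc[OF oH oH oZ oX dH _ gT] by metis
  obtain P0 i10 i20 p10 p20 where b0: "isbip C (fst H m) P0 i10 i20 p10 p20" using bip_ex oH by blast
  note bd0 = bpD[OF b0 oH]
  let ?T0 = "Tcx C P0 i20 p10"
  let ?\<Phi>0 = "\<lambda>n. if n = m then cp C (\<phi> m) p10 else if n = m - 1 then cp C (cp C (snd X m) (\<phi> m)) p20 else zr C P0 (fst X n)"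
  have "?\<Phi>0 \<in> chom C ?T0 X" using T_out[OF b0 oH s(3) \<phi>T] unfolding chom_def by blast
  then obtain \<Psi>0 where \<Psi>0: "\<Psi>0 \<in> chom C ?T0 Z" "ccomp C g \<Psi>0 = ?\<Phi>0" using T T_tilde[OF b0 oH hF] by blast
  have \<Psi>0m: "\<Psi>0 m \<in> Hm C P0 (fst Z m)" using \<Psi>0(1) cmT unfolding chom_def by (fastforce simp: Tcx_def)
  have g\<Psi>0: "cp C (g m) (\<Psi>0 m) = cp C (\<phi> m) p10" using fun_cong[OF \<Psi>0(2), of m] unfolding ccomp_def by simp
  define ell where "ell = cp C (\<Psi>0 m) i10"
  have ellT: "ell \<in> Hm C (fst H m) (fst Z m)" unfolding ell_def using cpT[OF oH bd0(1) oZ bd0(2) \<Psi>0m] .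
  have gell: "cp C (g m) ell = \<phi> m"
  proof -
    have "cp C (g m) ell = cp C (cp C (\<phi> m) p10) i10" unfolding ell_def using assoc[OF oH bd0(1) oZ oX bd0(2) \<Psi>0m gT] g\<Psi>0 by simp
    also have "\<dots> = \<phi> m" using assoc[OF oH bd0(1) oH oX bd0(2) bd0(4) \<phi>T] bd0(6) idR[OF oH oX \<phi>T] by simp
    finally show ?thesis .
  qed
  obtain P1 i11 i21 p11 p21 where b1: "isbip C (fst H (m+1)) P1 i11 i21 p11 p21" using bip_ex oH by blast
  note bd1 = bpD[OF b1 oH]
  let ?T1 = "Tcx C P1 i21 p11"
  let ?\<Phi>1 = "\<lambda>n. if n = m+1 then cp C (\<phi> (m+1)) p11 else if n = m + 1 - 1 then cp C (cp C (snd X (m+1)) (\<phi> (m+1))) p21 else zr C P1 (fst X n)"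
  have "?\<Phi>1 \<in> chom C ?T1 X" using T_out[OF b1 oH s(3) \<phi>T] unfolding chom_def by blast
  then obtain \<Psi>1 where \<Psi>1: "\<Psi>1 \<in> chom C ?T1 Z" "ccomp C g \<Psi>1 = ?\<Phi>1" using T T_tilde[OF b1 oH hF] by blast
  have \<Psi>1T: "\<And>n. \<Psi>1 n \<in> Hm C P1 (fst Z n)" using \<Psi>1(1) cmT unfolding chom_def by (fastforce simp: Tcx_def)
  have \<Psi>1C: "cp C (snd Z (m+1)) (\<Psi>1 (m+1)) = cp C (\<Psi>1 m) (cp C i21 p11)"
    using \<Psi>1(1) cmC[of ?T1 Z \<Psi>1 "m+1"] unfolding chom_def by (simp add: Tcx_def)
  have g\<Psi>1: "cp C (g (m+1)) (\<Psi>1 (m+1)) = cp C (\<phi> (m+1)) p11" using fun_cong[OF \<Psi>1(2), of "m+1"] unfolding ccomp_def by simp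
  have g\<Psi>1': "cp C (g m) (\<Psi>1 m) = cp C (cp C (snd X (m+1)) (\<phi> (m+1))) p21" using fun_cong[OF \<Psi>1(2), of "m"] unfolding ccomp_def by simp
  define \<beta> where "\<beta> = cp C (\<Psi>1 (m+1)) i11"
  define \<gamma> where "\<gamma> = cp C (\<Psi>1 m) i21"
  have \<beta>T: "\<beta> \<in> Hm C (fst H (m+1)) (fst Z (m+1))" unfolding \<beta>_def using cpT[OF oH bd1(1) oZ bd1(2) \<Psi>1T] .
  have \<gamma>T: "\<gamma> \<in> Hm C (fst H (m+1)) (fst Z m)" unfolding \<gamma>_def using cpT[OF oH bd1(1) oZ bd1(3) \<Psi>1T] .
  have dX\<phi>: "cp C (snd X (m+1)) (\<phi> (m+1)) \<in> Hm C (fst H (m+1)) (fst X m)"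
    using cpT[OF oH oX oX \<phi>T dX[of "m+1"]] by simp
  have g\<beta>: "cp C (g (m+1)) \<beta> = \<phi> (m+1)"
  proof -
    have "cp C (g (m+1)) \<beta> = cp C (cp C (\<phi> (m+1)) p11) i11" unfolding \<beta>_def using assoc[OF oH bd1(1) oZ oX bd1(2) \<Psi>1T gT] g\<Psi>1 by simp
    also have "\<dots> = \<phi> (m+1)" using assoc[OF oH bd1(1) oH oX bd1(2) bd1(4) \<phi>T] bd1(6) idR[OF oH oX \<phi>T] by simp
    finally show ?thesis .
  qed
  have d\<beta>: "cp C (snd Z (m+1)) \<beta> = \<gamma>"
  proof -
    have "cp C (snd Z (m+1)) \<beta> = cp C (cp C (\<Psi>1 m) (cp C i21 p11)) i11" unfolding \<beta>_def using assoc[OF oH bd1(1) oZ oZ bd1(2) \<Psi>1T dZ1] \<Psi>1C by simp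
    also have "\<dots> = cp C (\<Psi>1 m) (cp C (cp C i21 p11) i11)" using assoc[OF oH bd1(1) bd1(1) oZ bd1(2) dT[OF b1 oH] \<Psi>1T] by simp
    finally show ?thesis using di1[OF b1 oH] unfolding \<gamma>_def by simp
  qed
  have g\<gamma>: "cp C (g m) \<gamma> = cp C (snd X (m+1)) (\<phi> (m+1))"
  proof -
    have "cp C (g m) \<gamma> = cp C (cp C (cp C (snd X (m+1)) (\<phi> (m+1))) p21) i21" unfolding \<gamma>_def using assoc[OF oH bd1(1) oZ oX bd1(3) \<Psi>1T gT] g\<Psi>1' by simp
    also have "\<dots> = cp C (snd X (m+1)) (\<phi> (m+1))" using assoc[OF oH bd1(1) oH oX bd1(3) bd1(5) dX\<phi>] bd1(7) idR[OF oH oX dX\<phi>] by simp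
    finally show ?thesis .
  qed
  have elldT: "cp C ell (snd H (m+1)) \<in> Hm C (fst H (m+1)) (fst Z m)" using cpT[OF oH oH oZ dH1 ellT] .
  have eqg: "cp C (g m) (cp C ell (snd H (m+1))) = cp C (g m) \<gamma>"
    using core2[of ell "m+1"] ellT gell g\<gamma> \<phi>C[of "m+1"] by simp
  define \<delta> where "\<delta> = ad C (cp C ell (snd H (m+1))) (ng C \<gamma>)"
  have \<delta>T: "\<delta> \<in> Hm C (fst H (m+1)) (fst Z m)" unfolding \<delta>_def using adT ngT oH oZ elldT \<gamma>T by blast
  have g\<delta>: "cp C (g m) \<delta> = zr C (fst H (m+1)) (fst X m)" unfolding \<delta>_def using diff_comp_zero[OF oH oZ oX elldT \<gamma>T gT eqg] .
  obtain \<epsilon> where \<epsilon>T: "\<epsilon> \<in> Hm C (fst H (m+1)) c" and f\<epsilon>: "cp C (f m) \<epsilon> = \<delta>" using kernel_factor[OF kerm oH \<delta>T g\<delta>] by blast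
  have f1\<epsilon>: "cp C (f (m+1)) \<epsilon> \<in> Hm C (fst H (m+1)) (fst Z (m+1))" using cpT[OF oH c oZ \<epsilon>T fm1] .
  define \<beta>' where "\<beta>' = ad C \<beta> (cp C (f (m+1)) \<epsilon>)"
  have \<beta>'T: "\<beta>' \<in> Hm C (fst H (m+1)) (fst Z (m+1))" unfolding \<beta>'_def using adT oH oZ \<beta>T f1\<epsilon> by blast
  have d\<beta>': "cp C (snd Z (m+1)) \<beta>' = cp C ell (snd H (m+1))"
  proof -
    have "cp C (snd Z (m+1)) \<beta>' = ad C (cp C (snd Z (m+1)) \<beta>) (cp C (snd Z (m+1)) (cp C (f (m+1)) \<epsilon>))"
      unfolding \<beta>'_def using distL[OF oH oZ oZ \<beta>T f1\<epsilon> dZ1] .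
    also have "\<dots> = ad C \<gamma> \<delta>" using d\<beta> assoc[OF oH c oZ oZ \<epsilon>T fm1 dZ1] df f\<epsilon> by simp
    also have "\<dots> = cp C ell (snd H (m+1))" unfolding \<delta>_def using sub_cancel[OF oH oZ elldT \<gamma>T] .
    finally show ?thesis .
  qed
  have g\<beta>': "cp C (g (m+1)) \<beta>' = \<phi> (m+1)"
  proof -
    have "cp C (g (m+1)) \<beta>' = ad C (cp C (g (m+1)) \<beta>) (cp C (g (m+1)) (cp C (f (m+1)) \<epsilon>))"
      unfolding \<beta>'_def using distL[OF oH oZ oX \<beta>T f1\<epsilon> gT] .
    also have "\<dots> = ad C (\<phi> (m+1)) (zr C (fst H (m+1)) (fst X (m+1)))"
      using g\<beta> assoc[OF oH c oZ oX \<epsilon>T fm1 gT] gf1 zr_left[OF oH c oX \<epsilon>T] by simp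
    also have "\<dots> = \<phi> (m+1)" using ad_zr[OF oH oX \<phi>T] .
    finally show ?thesis .
  qed
  define \<psi> where "\<psi> = (\<lambda>n. if n = m+1 then \<beta>' else if n = m then ell else cp C (v n) (\<phi> n))"
  have \<psi>T: "\<And>n. \<psi> n \<in> Hm C (fst H n) (fst Z n)" unfolding \<psi>_def using \<beta>'T ellT v\<phi>T by auto
  have g\<psi>: "\<And>n. cp C (g n) (\<psi> n) = \<phi> n" unfolding \<psi>_def using g\<beta>' gell gv\<phi> by auto
  have gen: "\<And>n. n - 1 \<noteq> m + 1 \<Longrightarrow> n - 1 \<noteq> m \<Longrightarrow> cp C (snd Z n) (\<psi> n) = cp C (\<psi> (n-1)) (snd H n)"
  proof -
    fix n assume a: "n - 1 \<noteq> m + 1" "n - 1 \<noteq> m"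
    have vv: "v (n-1) \<in> Hm C (fst X (n-1)) (fst Z (n-1))" "cp C (v (n-1)) (g (n-1)) = ident C (fst Z (n-1))" using vP a by auto
    have l: "cp C (g (n-1)) (cp C (snd Z n) (\<psi> n)) = cp C (\<phi> (n-1)) (snd H n)" using core \<psi>T g\<psi> by blast
    have r: "cp C (g (n-1)) (cp C (\<psi> (n-1)) (snd H n)) = cp C (\<phi> (n-1)) (snd H n)" using core2 \<psi>T g\<psi> by blast
    show "cp C (snd Z n) (\<psi> n) = cp C (\<psi> (n-1)) (snd H n)"
      using sect_cancel[OF oZ oX oH vv(1) gT vv(2) cpT[OF oH oZ oZ \<psi>T dZ] cpT[OF oH oH oZ dH \<psi>T]] l r by simp
  qed
  have chain: "chain_map C H Z \<psi>" unfolding chain_map_def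
  proof (intro allI conjI)
    fix n
    show "\<psi> n \<in> Hm C (fst H n) (fst Z n)" by (rule \<psi>T)
    show "cp C (snd Z n) (\<psi> n) = cp C (\<psi> (n - 1)) (snd H n)"
    proof (cases "n = m + 1")
      case True
      then show ?thesis using d\<beta>' unfolding \<psi>_def by simp
    next
      case n1: False
      show ?thesis
      proof (cases "n = m + 2")
        case False
        then show ?thesis using gen n1 by auto
      next
        case True
        have nm: "n - 1 = m + 1" "n \<noteq> m" using True by auto
        have dZ2: "snd Z n \<in> Hm C (fst Z n) (fst Z (m+1))" using dZ[of n] nm by simp
        have dH2: "snd H n \<in> Hm C (fst H n) (fst H (m+1))" using dH[of n] nm by simp
        have xT: "cp C (snd Z n) (\<psi> n) \<in> Hm C (fst H n) (fst Z (m+1))" using cpT[OF oH oZ oZ \<psi>T dZ2] .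
        have yT: "cp C \<beta>' (snd H n) \<in> Hm C (fst H n) (fst Z (m+1))" using cpT[OF oH oH oZ dH2 \<beta>'T] .
        have gx: "cp C (g (m+1)) (cp C (snd Z n) (\<psi> n)) = cp C (\<phi> (m+1)) (snd H n)" using core[OF \<psi>T g\<psi>, of n] nm by simp
        have gy: "cp C (g (m+1)) (cp C \<beta>' (snd H n)) = cp C (\<phi> (m+1)) (snd H n)"
          using assoc[OF oH oH oZ oX dH2 \<beta>'T gT] g\<beta>' by simp
        have e2: "m + 2 - 1 = m + 1" "m + 2 - 2 = m" by simp_all
        have ddZ: "cp C (snd Z (m+1)) (snd Z (m+2)) = zr C (fst Z (m+2)) (fst Z m)" using cxdd[OF s(2), of "m+2"] unfolding e2 .
        have ddH: "cp C (snd H (m+1)) (snd H (m+2)) = zr C (fst H (m+2)) (fst H m)" using cxdd[OF hc, of "m+2"] unfolding e2 .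
        have rx: "cp C (snd Z (m+1)) (cp C (snd Z n) (\<psi> n)) = zr C (fst H n) (fst Z m)"
          using assoc[OF oH oZ oZ oZ \<psi>T dZ2 dZ1] ddZ nm zr_left[OF oH oZ oZ \<psi>T] by (simp add: True)
        have ry: "cp C (snd Z (m+1)) (cp C \<beta>' (snd H n)) = zr C (fst H n) (fst Z m)"
        proof -
          have "cp C (snd Z (m+1)) (cp C \<beta>' (snd H n)) = cp C (cp C ell (snd H (m+1))) (snd H n)"
            using assoc[OF oH oH oZ oZ dH2 \<beta>'T dZ1] d\<beta>' by simp
          also have "\<dots> = cp C ell (cp C (snd H (m+1)) (snd H n))" using assoc[OF oH oH oH oZ dH2 dH1 ellT] by simp
          also have "\<dots> = zr C (fst H n) (fst Z m)" using ddH nm zr_right[OF oH oH oZ ellT] by (simp add: True)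
          finally show ?thesis .
        qed
        have "cp C (snd Z n) (\<psi> n) = cp C \<beta>' (snd H n)"
          using kpair[OF kerm1 c oZ oX oZ oH gT fm1 dZ1 _ xT yT] gx gy rx ry df monofm by simp
        then show ?thesis using nm unfolding \<psi>_def by simp
      qed
    qed
  qed
  have "ccomp C g \<psi> = \<phi>" unfolding ccomp_def using g\<psi> by auto
  then show "\<exists>\<psi>\<in>chom C H Z. ccomp C g \<psi> = \<phi>" using chain unfolding chom_def by blast
qed

end

context ab begin

lemma part3:
  assumes F: "\<F> \<subseteq> Ob C" and c: "c \<in> Ob C"
    and S: "ses_ch C Y Z (disk C m c) f' g'"
    and T: "\<forall>H\<in>tilde C \<F>. \<forall>\<phi>\<in>chom C H (disk C m c). \<exists>\<psi>\<in>chom C H Z. ccomp C g' \<psi> = \<phi>"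
    and H: "H \<in> dwtilde C \<F>"
  shows "\<forall>\<phi>\<in>chom C H (disk C m c). \<exists>\<psi>\<in>chom C H Z. ccomp C g' \<psi> = \<phi>"
proof
  fix \<phi> assume \<phi>: "\<phi> \<in> chom C H (disk C m c)"
  let ?D = "disk C m c"
  note s = ses_chD[OF S]
  have hc: "is_complex C H" and hF: "\<And>n. fst H n \<in> \<F>" using H unfolding dwtilde_def by auto
  note oZ = cxOb[OF s(2)] and oD = cxOb[OF s(3)] and oH = cxOb[OF hc]
  note dZ = cxd[OF s(2)] and dD = cxd[OF s(3)] and dH = cxd[OF hc]
  note gT = cmT[OF s(5)]
  have \<phi>T: "\<And>n. \<phi> n \<in> Hm C (fst H n) (fst ?D n)" and \<phi>C: "\<And>n. cp C (snd ?D n) (\<phi> n) = cp C (\<phi> (n-1)) (snd H n)"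
    using \<phi> unfolding chom_def chain_map_def by auto
  have D1: "fst ?D m = c" "fst ?D (m-1) = c" by (simp_all add: disk_fst)
  have Dz: "\<And>n. n \<noteq> m \<Longrightarrow> n \<noteq> m - 1 \<Longrightarrow> fst ?D n = zobj C" by (simp add: disk_fst)
  define b where "b = \<phi> (m-1)"
  have bT: "b \<in> Hm C (fst H (m-1)) c" unfolding b_def using \<phi>T[of "m-1"] D1 by simp
  have \<phi>m: "\<phi> m = cp C b (snd H m)" using \<phi>C[of m] idL[OF oH c, of "\<phi> m"] \<phi>T[of m] D1 unfolding b_def by (simp add: disk_snd)
  obtain P i1 i2 p1 p2 where bp: "isbip C (fst H (m-1)) P i1 i2 p1 p2" using bip_ex oH by blast
  note bd = bpD[OF bp oH]
  let ?T = "Tcx C P i2 p1"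
  have bT': "b \<in> Hm C (fst H (m-1)) (fst ?D m)" using bT D1 by simp
  let ?\<Phi> = "\<lambda>n. if n = m then cp C b p1 else if n = m - 1 then cp C (cp C (snd ?D m) b) p2 else zr C P (fst ?D n)"
  have "?\<Phi> \<in> chom C ?T ?D" using T_out[OF bp oH s(3) bT'] unfolding chom_def by blast
  then obtain \<Psi> where \<Psi>: "\<Psi> \<in> chom C ?T Z" "ccomp C g' \<Psi> = ?\<Phi>" using T T_tilde[OF bp oH hF] by blast
  have \<Psi>T: "\<And>n. \<Psi> n \<in> Hm C P (fst Z n)" using \<Psi>(1) cmT unfolding chom_def by (fastforce simp: Tcx_def)
  have \<Psi>C: "cp C (snd Z m) (\<Psi> m) = cp C (\<Psi> (m-1)) (cp C i2 p1)"
    using \<Psi>(1) cmC[of ?T Z \<Psi> m] unfolding chom_def by (simp add: Tcx_def)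
  have g\<Psi>: "cp C (g' m) (\<Psi> m) = cp C b p1" using fun_cong[OF \<Psi>(2), of m] unfolding ccomp_def by simp
  have g\<Psi>': "cp C (g' (m-1)) (\<Psi> (m-1)) = cp C b p2"
    using fun_cong[OF \<Psi>(2), of "m-1"] idL[OF oH c bT] unfolding ccomp_def by (simp add: disk_snd)
  have gm: "g' m \<in> Hm C (fst Z m) c" using gT[of m] D1 by simp
  have gm1: "g' (m-1) \<in> Hm C (fst Z (m-1)) c" using gT[of "m-1"] D1 by simp
  define l0 where "l0 = cp C (\<Psi> m) i1"
  define l1 where "l1 = cp C (\<Psi> (m-1)) i2"
  have l0T: "l0 \<in> Hm C (fst H (m-1)) (fst Z m)" unfolding l0_def using cpT[OF oH bd(1) oZ bd(2) \<Psi>T] .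
  have l1T: "l1 \<in> Hm C (fst H (m-1)) (fst Z (m-1))" unfolding l1_def using cpT[OF oH bd(1) oZ bd(3) \<Psi>T] .
  have gl0: "cp C (g' m) l0 = b"
  proof -
    have "cp C (g' m) l0 = cp C (cp C b p1) i1" unfolding l0_def using assoc[OF oH bd(1) oZ c bd(2) \<Psi>T gm] g\<Psi> by simp
    also have "\<dots> = b" using assoc[OF oH bd(1) oH c bd(2) bd(4) bT] bd(6) idR[OF oH c bT] by simp
    finally show ?thesis .
  qed
  have gl1: "cp C (g' (m-1)) l1 = b"
  proof -
    have "cp C (g' (m-1)) l1 = cp C (cp C b p2) i2" unfolding l1_def using assoc[OF oH bd(1) oZ c bd(3) \<Psi>T gm1] g\<Psi>' by simp
    also have "\<dots> = b" using assoc[OF oH bd(1) oH c bd(3) bd(5) bT] bd(7) idR[OF oH c bT] by simp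
    finally show ?thesis .
  qed
  have dl0: "cp C (snd Z m) l0 = l1"
  proof -
    have "cp C (snd Z m) l0 = cp C (cp C (\<Psi> (m-1)) (cp C i2 p1)) i1" unfolding l0_def using assoc[OF oH bd(1) oZ oZ bd(2) \<Psi>T dZ] \<Psi>C by simp
    also have "\<dots> = cp C (\<Psi> (m-1)) (cp C (cp C i2 p1) i1)" using assoc[OF oH bd(1) bd(1) oZ bd(2) dT[OF bp oH] \<Psi>T] by simp
    finally show ?thesis using di1[OF bp oH] unfolding l1_def by simp
  qed
  define \<psi> where "\<psi> = (\<lambda>n. if n = m then cp C l0 (snd H m) else if n = m - 1 then l1 else zr C (fst H n) (fst Z n))"
  have \<psi>T: "\<And>n. \<psi> n \<in> Hm C (fst H n) (fst Z n)" unfolding \<psi>_def using cpT[OF oH oH oZ dH l0T] l1T zrT[OF oH oZ] by auto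
  have g\<psi>: "\<And>n. cp C (g' n) (\<psi> n) = \<phi> n"
  proof -
    fix n
    show "cp C (g' n) (\<psi> n) = \<phi> n"
    proof (cases "n = m")
      case True
      then show ?thesis unfolding \<psi>_def using assoc[OF oH oH oZ c dH l0T gm] gl0 \<phi>m by simp
    next
      case nm: False
      show ?thesis
      proof (cases "n = m - 1")
        case True
        then show ?thesis unfolding \<psi>_def b_def using gl1 nm by (simp add: b_def)
      next
        case False
        have "cp C (g' n) (\<psi> n) \<in> Hm C (fst H n) (zobj C)" using cpT[OF oH oZ oD \<psi>T gT, of n] Dz[OF nm False] by simp
        moreover have "\<phi> n \<in> Hm C (fst H n) (zobj C)" using \<phi>T[of n] Dz[OF nm False] by simp
        ultimately show ?thesis using zobj_to[OF oH, of n] by simp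
      qed
    qed
  qed
  have chain: "chain_map C H Z \<psi>" unfolding chain_map_def
  proof (intro allI conjI)
    fix n
    show "\<psi> n \<in> Hm C (fst H n) (fst Z n)" by (rule \<psi>T)
    show "cp C (snd Z n) (\<psi> n) = cp C (\<psi> (n - 1)) (snd H n)"
    proof (cases "n = m")
      case True
      then show ?thesis unfolding \<psi>_def using assoc[OF oH oH oZ oZ dH l0T dZ] dl0 by simp
    next
      case nm: False
      show ?thesis
      proof (cases "n = m - 1")
        case True
        have "cp C (snd Z (m-1)) l1 = cp C (cp C (snd Z (m-1)) (snd Z m)) l0" using dl0 assoc[OF oH oZ oZ oZ l0T dZ dZ] by simp
        also have "\<dots> = zr C (fst H (m-1)) (fst Z (m-2))" using cxdd[OF s(2), of m] zr_left[OF oH oZ oZ l0T] by simp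
        finally have l: "cp C (snd Z (m-1)) l1 = zr C (fst H (m-1)) (fst Z (m-2))" .
        have e: "m - 1 - 1 = m - 2" by simp
        have r: "cp C (zr C (fst H (m-1-1)) (fst Z (m-1-1))) (snd H (m-1)) = zr C (fst H (m-1)) (fst Z (m-1-1))"
          using zr_left[OF oH oH oZ dH] .
        show ?thesis using True l r unfolding \<psi>_def e by simp
      next
        case nm1: False
        show ?thesis
        proof (cases "n = m + 1")
          case True
          have e: "m + 1 - 1 = m" by simp
          have dH1: "snd H (m+1) \<in> Hm C (fst H (m+1)) (fst H m)" using dH[of "m+1"] unfolding e .
          have "cp C (cp C l0 (snd H m)) (snd H (m+1)) = cp C l0 (cp C (snd H m) (snd H (m+1)))"
            using assoc[OF oH oH oH oZ dH1 dH l0T] by simp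
          also have "\<dots> = zr C (fst H (m+1)) (fst Z m)" using cxdd'[OF hc, of m] zr_right[OF oH oH oZ l0T] by simp
          finally have r: "cp C (cp C l0 (snd H m)) (snd H (m+1)) = zr C (fst H (m+1)) (fst Z m)" .
          have l: "cp C (snd Z (m+1)) (zr C (fst H (m+1)) (fst Z (m+1))) = zr C (fst H (m+1)) (fst Z (m+1-1))"
            using zr_right[OF oH oZ oZ dZ] .
          show ?thesis using True l r nm nm1 unfolding \<psi>_def e by simp
        next
          case False
          have "n - 1 \<noteq> m" "n - 1 \<noteq> m - 1" using False nm by auto
          then show ?thesis unfolding \<psi>_def using nm nm1 zr_right[OF oH oZ oZ dZ] zr_left[OF oH oH oZ dH] by simp
        qed
      qed
    qed
  qed
  have "ccomp C g' \<psi> = \<phi>" unfolding ccomp_def using g\<psi> by auto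
  then show "\<exists>\<psi>\<in>chom C H Z. ccomp C g' \<psi> = \<phi>" using chain unfolding chom_def by blast
qed

end

context ab begin

lemma part2:
  assumes F: "\<F> \<subseteq> Ob C" and c: "c \<in> Ob C"
    and S: "ses_ch C (disk C (m + 1) c) Z X f g"
    and T: "\<forall>H\<in>tilde C \<F>. \<forall>\<phi>\<in>chom C (disk C (m + 1) c) H. \<exists>\<psi>\<in>chom C Z H. ccomp C \<psi> f = \<phi>"
    and H: "H \<in> dwtilde C \<F>"
  shows "\<forall>\<phi>\<in>chom C (disk C (m + 1) c) H. \<exists>\<psi>\<in>chom C Z H. ccomp C \<psi> f = \<phi>"
proof
  let ?D = "disk C (m+1) c"
  fix \<phi> assume \<phi>: "\<phi> \<in> chom C ?D H"
  note s = ses_chD[OF S]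
  have hc: "is_complex C H" and hF: "\<And>n. fst H n \<in> \<F>" using H unfolding dwtilde_def by auto
  note oZ = cxOb[OF s(2)] and oD = cxOb[OF s(1)] and oH = cxOb[OF hc]
  note dZ = cxd[OF s(2)] and dH = cxd[OF hc]
  note fT = cmT[OF s(4)]
  have \<phi>T: "\<And>n. \<phi> n \<in> Hm C (fst ?D n) (fst H n)" and \<phi>C: "\<And>n. cp C (snd H n) (\<phi> n) = cp C (\<phi> (n-1)) (snd ?D n)"
    using \<phi> unfolding chom_def chain_map_def by auto
  have D1: "fst ?D (m+1) = c" "fst ?D m = c" by (simp_all add: disk_fst)
  have Dz: "\<And>n. n \<noteq> m+1 \<Longrightarrow> n \<noteq> m \<Longrightarrow> fst ?D n = zobj C" by (simp add: disk_fst)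
  have e1: "m + 1 - 1 = m" "m + 2 - 1 = m + 1" by simp_all
  define a where "a = \<phi> (m+1)"
  have aT: "a \<in> Hm C c (fst H (m+1))" unfolding a_def using \<phi>T[of "m+1"] D1 by simp
  have dH1: "snd H (m+1) \<in> Hm C (fst H (m+1)) (fst H m)" using dH[of "m+1"] unfolding e1 .
  have dZ1: "snd Z (m+1) \<in> Hm C (fst Z (m+1)) (fst Z m)" using dZ[of "m+1"] unfolding e1 .
  have dZ2: "snd Z (m+2) \<in> Hm C (fst Z (m+2)) (fst Z (m+1))" using dZ[of "m+2"] unfolding e1 .
  have \<phi>m: "\<phi> m = cp C (snd H (m+1)) a"
    using \<phi>C[of "m+1"] idR[OF c oH, of "\<phi> m"] \<phi>T[of m] D1 unfolding a_def e1 by (simp add: disk_snd)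
  have fm: "f m \<in> Hm C c (fst Z m)" using fT[of m] D1 by simp
  have fm1: "f (m+1) \<in> Hm C c (fst Z (m+1))" using fT[of "m+1"] D1 by simp
  obtain P i1 i2 p1 p2 where bp: "isbip C (fst H (m+1)) P i1 i2 p1 p2" using bip_ex oH by blast
  note bd = bpD[OF bp oH]
  let ?T = "Tcx C P i2 p1"
  have aT': "a \<in> Hm C (fst ?D m) (fst H (m+1))" using aT D1 by simp
  let ?\<Phi> = "\<lambda>n. if n = m + 1 then cp C (cp C i1 a) (snd ?D (m+1)) else if n = m then cp C i2 a else zr C (fst ?D n) P"
  have "?\<Phi> \<in> chom C ?D ?T" using T_in[OF bp oH s(1) aT'] unfolding chom_def by blast
  then obtain \<Psi> where \<Psi>: "\<Psi> \<in> chom C Z ?T" "ccomp C \<Psi> f = ?\<Phi>" using T T_tilde[OF bp oH hF] by blast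
  have \<Psi>T: "\<And>n. \<Psi> n \<in> Hm C (fst Z n) P" using \<Psi>(1) cmT unfolding chom_def by (fastforce simp: Tcx_def)
  have \<Psi>C1: "cp C (cp C i2 p1) (\<Psi> (m+1)) = cp C (\<Psi> m) (snd Z (m+1))"
    using \<Psi>(1) cmC[of Z ?T \<Psi> "m+1"] unfolding chom_def by (simp add: Tcx_def)
  have \<Psi>C2: "cp C (cp C i2 p1) (\<Psi> (m+2)) = cp C (\<Psi> (m+1)) (snd Z (m+2))"
    using \<Psi>(1) cmC[of Z ?T \<Psi> "m+2"] unfolding chom_def e1 by (simp add: Tcx_def)
  have i1a: "cp C i1 a \<in> Hm C c P" using cpT[OF c oH bd(1) aT bd(2)] .
  have \<Psi>f1: "cp C (\<Psi> (m+1)) (f (m+1)) = cp C i1 a"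
    using fun_cong[OF \<Psi>(2), of "m+1"] idR[OF c bd(1) i1a] unfolding ccomp_def by (simp add: disk_snd)
  have \<Psi>f0: "cp C (\<Psi> m) (f m) = cp C i2 a" using fun_cong[OF \<Psi>(2), of m] unfolding ccomp_def by simp
  define \<rho>1 where "\<rho>1 = cp C p1 (\<Psi> (m+1))"
  define \<rho>0 where "\<rho>0 = cp C p2 (\<Psi> m)"
  have \<rho>1T: "\<rho>1 \<in> Hm C (fst Z (m+1)) (fst H (m+1))" unfolding \<rho>1_def using cpT[OF oZ bd(1) oH \<Psi>T bd(4)] .
  have \<rho>0T: "\<rho>0 \<in> Hm C (fst Z m) (fst H (m+1))" unfolding \<rho>0_def using cpT[OF oZ bd(1) oH \<Psi>T bd(5)] .
  have \<rho>1f: "cp C \<rho>1 (f (m+1)) = a"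
  proof -
    have "cp C \<rho>1 (f (m+1)) = cp C p1 (cp C i1 a)" unfolding \<rho>1_def using assoc[OF c oZ bd(1) oH fm1 \<Psi>T bd(4)] \<Psi>f1 by simp
    also have "\<dots> = a" using assoc[OF c oH bd(1) oH aT bd(2) bd(4)] bd(6) idL[OF c oH aT] by simp
    finally show ?thesis .
  qed
  have \<rho>0f: "cp C \<rho>0 (f m) = a"
  proof -
    have "cp C \<rho>0 (f m) = cp C p2 (cp C i2 a)" unfolding \<rho>0_def using assoc[OF c oZ bd(1) oH fm \<Psi>T bd(5)] \<Psi>f0 by simp
    also have "\<dots> = a" using assoc[OF c oH bd(1) oH aT bd(3) bd(5)] bd(7) idL[OF c oH aT] by simp
    finally show ?thesis .
  qed
  have \<rho>0d: "cp C \<rho>0 (snd Z (m+1)) = \<rho>1"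
  proof -
    have "cp C \<rho>0 (snd Z (m+1)) = cp C p2 (cp C (cp C i2 p1) (\<Psi> (m+1)))"
      unfolding \<rho>0_def using assoc[OF oZ oZ bd(1) oH dZ1 \<Psi>T bd(5)] \<Psi>C1 by simp
    also have "\<dots> = \<rho>1" unfolding \<rho>1_def using assoc[OF oZ bd(1) bd(1) oH \<Psi>T dT[OF bp oH] bd(5)] p2d[OF bp oH] by simp
    finally show ?thesis .
  qed
  have \<rho>1d: "cp C \<rho>1 (snd Z (m+2)) = zr C (fst Z (m+2)) (fst H (m+1))"
  proof -
    have "cp C \<rho>1 (snd Z (m+2)) = cp C p1 (cp C (cp C i2 p1) (\<Psi> (m+2)))"
      unfolding \<rho>1_def using assoc[OF oZ oZ bd(1) oH dZ2 \<Psi>T bd(4)] \<Psi>C2 by simp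
    also have "\<dots> = zr C (fst Z (m+2)) (fst H (m+1))"
      using assoc[OF oZ bd(1) bd(1) oH \<Psi>T dT[OF bp oH] bd(4)] p1d[OF bp oH] zr_left[OF oZ bd(1) oH \<Psi>T] by simp
    finally show ?thesis .
  qed
  define \<psi> where "\<psi> = (\<lambda>n. if n = m+1 then \<rho>1 else if n = m then cp C (snd H (m+1)) \<rho>0 else zr C (fst Z n) (fst H n))"
  have \<psi>T: "\<And>n. \<psi> n \<in> Hm C (fst Z n) (fst H n)" unfolding \<psi>_def using cpT[OF oZ oH oH \<rho>0T dH1] \<rho>1T zrT[OF oZ oH] by auto
  have \<psi>f: "\<And>n. cp C (\<psi> n) (f n) = \<phi> n"
  proof -
    fix n
    show "cp C (\<psi> n) (f n) = \<phi> n"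
    proof (cases "n = m + 1")
      case True
      then show ?thesis unfolding \<psi>_def using \<rho>1f a_def by simp
    next
      case n1: False
      show ?thesis
      proof (cases "n = m")
        case True
        then show ?thesis unfolding \<psi>_def using n1 assoc[OF c oZ oH oH fm \<rho>0T dH1] \<rho>0f \<phi>m by simp
      next
        case False
        have "cp C (\<psi> n) (f n) \<in> Hm C (zobj C) (fst H n)" using cpT[OF oD oZ oH fT \<psi>T, of n] Dz[OF n1 False] by simp
        moreover have "\<phi> n \<in> Hm C (zobj C) (fst H n)" using \<phi>T[of n] Dz[OF n1 False] by simp
        ultimately show ?thesis using zobj_from[OF oH, of n] by simp
      qed
    qed
  qed
  have chain: "chain_map C Z H \<psi>" unfolding chain_map_def
  proof (intro allI conjI)
    fix n
    show "\<psi> n \<in> Hm C (fst Z n) (fst H n)" by (rule \<psi>T)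
    show "cp C (snd H n) (\<psi> n) = cp C (\<psi> (n - 1)) (snd Z n)"
    proof (cases "n = m + 1")
      case True
      then show ?thesis unfolding \<psi>_def using assoc[OF oZ oZ oH oH dZ1 \<rho>0T dH1] \<rho>0d e1 by simp
    next
      case n1: False
      show ?thesis
      proof (cases "n = m + 2")
        case True
        have l: "cp C (snd H (m+2)) (zr C (fst Z (m+2)) (fst H (m+2))) = zr C (fst Z (m+2)) (fst H (m+2-1))"
          using zr_right[OF oZ oH oH dH] .
        show ?thesis using True l \<rho>1d unfolding \<psi>_def e1 by simp
      next
        case n2: False
        show ?thesis
        proof (cases "n = m")
          case True
          have "cp C (snd H m) (cp C (snd H (m+1)) \<rho>0) = cp C (cp C (snd H m) (snd H (m+1))) \<rho>0"
            using assoc[OF oZ oH oH oH \<rho>0T dH1 dH] .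
          also have "\<dots> = zr C (fst Z m) (fst H (m-1))" using cxdd'[OF hc, of m] zr_left[OF oZ oH oH \<rho>0T] by simp
          finally have l: "cp C (snd H m) (cp C (snd H (m+1)) \<rho>0) = zr C (fst Z m) (fst H (m-1))" .
          have r: "cp C (zr C (fst Z (m-1)) (fst H (m-1))) (snd Z m) = zr C (fst Z m) (fst H (m-1))"
            using zr_left[OF oZ oZ oH dZ] .
          show ?thesis using True l r unfolding \<psi>_def by simp
        next
          case False
          have "n - 1 \<noteq> m" "n - 1 \<noteq> m + 1" using n2 n1 False by auto
          then show ?thesis unfolding \<psi>_def using False n1 zr_right[OF oZ oH oH dH] zr_left[OF oZ oZ oH dZ] by simp
        qed
      qed
    qed
  qed
  have "ccomp C \<psi> f = \<phi>" unfolding ccomp_def using \<psi>f by auto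
  then show "\<exists>\<psi>\<in>chom C Z H. ccomp C \<psi> f = \<phi>" using chain unfolding chom_def by blast
qed

end

context ab begin

lemma part4:
  assumes F: "\<F> \<subseteq> Ob C" and c: "c \<in> Ob C"
    and S: "ses_ch C Y Z (disk C m c) f' g'"
    and T: "\<forall>H\<in>tilde C \<F>. \<forall>\<phi>\<in>chom C Y H. \<exists>\<psi>\<in>chom C Z H. ccomp C \<psi> f' = \<phi>"
    and H: "H \<in> dwtilde C \<F>"
  shows "\<forall>\<phi>\<in>chom C Y H. \<exists>\<psi>\<in>chom C Z H. ccomp C \<psi> f' = \<phi>"
proof
  let ?D = "disk C m c"
  fix \<phi> assume \<phi>: "\<phi> \<in> chom C Y H"
  note s = ses_chD[OF S]
  have hc: "is_complex C H" and hF: "\<And>n. fst H n \<in> \<F>" using H unfolding dwtilde_def by auto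
  note oZ = cxOb[OF s(2)] and oY = cxOb[OF s(1)] and oH = cxOb[OF hc]
  note dZ = cxd[OF s(2)] and dH = cxd[OF hc] and dY = cxd[OF s(1)]
  note fT = cmT[OF s(4)] and gT = cmT[OF s(5)]
  have \<phi>T: "\<And>n. \<phi> n \<in> Hm C (fst Y n) (fst H n)" and \<phi>C: "\<And>n. cp C (snd H n) (\<phi> n) = cp C (\<phi> (n-1)) (snd Y n)"
    using \<phi> unfolding chom_def chain_map_def by auto
  have D1: "fst ?D m = c" "fst ?D (m-1) = c" by (simp_all add: disk_fst)
  have Dz: "\<And>n. n \<noteq> m \<Longrightarrow> n \<noteq> m - 1 \<Longrightarrow> fst ?D n = zobj C" by (simp add: disk_fst)
  have iso: "\<And>n. n \<noteq> m \<Longrightarrow> n \<noteq> m - 1 \<Longrightarrow> \<exists>v\<in>Hm C (fst Z n) (fst Y n). cp C v (f' n) = ident C (fst Y n) \<and> cp C (f' n) v = ident C (fst Z n)"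
    using ses_iso_f s(6) Dz by metis
  define v where "v = (\<lambda>n. SOME v. v\<in>Hm C (fst Z n) (fst Y n) \<and> cp C v (f' n) = ident C (fst Y n) \<and> cp C (f' n) v = ident C (fst Z n))"
  have vP: "\<And>n. n \<noteq> m \<Longrightarrow> n \<noteq> m - 1 \<Longrightarrow> v n \<in> Hm C (fst Z n) (fst Y n) \<and> cp C (v n) (f' n) = ident C (fst Y n) \<and> cp C (f' n) (v n) = ident C (fst Z n)"
    unfolding v_def by (rule someI_ex) (use iso in blast)
  have \<phi>vf: "\<And>n. n \<noteq> m \<Longrightarrow> n \<noteq> m - 1 \<Longrightarrow> cp C (cp C (\<phi> n) (v n)) (f' n) = \<phi> n"
  proof -
    fix n assume a: "n \<noteq> m" "n \<noteq> m - 1"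
    have "cp C (cp C (\<phi> n) (v n)) (f' n) = cp C (\<phi> n) (cp C (v n) (f' n))" using assoc[OF oY oZ oY oH fT _ \<phi>T] vP[OF a] by metis
    then show "cp C (cp C (\<phi> n) (v n)) (f' n) = \<phi> n" using vP[OF a] idR[OF oY oH \<phi>T] by simp
  qed
  have \<phi>vT: "\<And>n. n \<noteq> m \<Longrightarrow> n \<noteq> m - 1 \<Longrightarrow> cp C (\<phi> n) (v n) \<in> Hm C (fst Z n) (fst H n)"
    using vP cpT[OF oZ oY oH _ \<phi>T] by blast
  have core: "\<And>n x. x \<in> Hm C (fst Z n) (fst H n) \<Longrightarrow> cp C x (f' n) = \<phi> n \<Longrightarrow>
     cp C (cp C (snd H n) x) (f' n) = cp C (\<phi> (n-1)) (snd Y n)"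
    using assoc[OF oY oZ oH oH fT _ dH] \<phi>C by metis
  have core2: "\<And>n y. y \<in> Hm C (fst Z (n-1)) (fst H (n-1)) \<Longrightarrow> cp C y (f' (n-1)) = \<phi> (n-1) \<Longrightarrow>
     cp C (cp C y (snd Z n)) (f' n) = cp C (\<phi> (n-1)) (snd Y n)"
  proof -
    fix n y assume y: "y \<in> Hm C (fst Z (n-1)) (fst H (n-1))" and yf: "cp C y (f' (n-1)) = \<phi> (n-1)"
    have "cp C (cp C y (snd Z n)) (f' n) = cp C y (cp C (snd Z n) (f' n))" using assoc[OF oY oZ oZ oH fT dZ y] by simp
    also have "\<dots> = cp C y (cp C (f' (n-1)) (snd Y n))" using cmC[OF s(4)] by simp
    also have "\<dots> = cp C (\<phi> (n-1)) (snd Y n)" using assoc[OF oY oY oZ oH dY fT y] yf by simp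
    finally show "cp C (cp C y (snd Z n)) (f' n) = cp C (\<phi> (n-1)) (snd Y n)" .
  qed
  obtain P0 i10 i20 p10 p20 where b0: "isbip C (fst H m) P0 i10 i20 p10 p20" using bip_ex oH by blast
  note bd0 = bpD[OF b0 oH]
  let ?T0 = "Tcx C P0 i20 p10"
  let ?\<Phi>0 = "\<lambda>n. if n = m + 1 then cp C (cp C i10 (\<phi> m)) (snd Y (m+1)) else if n = m then cp C i20 (\<phi> m) else zr C (fst Y n) P0"
  have "?\<Phi>0 \<in> chom C Y ?T0" using T_in[OF b0 oH s(1) \<phi>T] unfolding chom_def by blast
  then obtain \<Psi>0 where \<Psi>0: "\<Psi>0 \<in> chom C Z ?T0" "ccomp C \<Psi>0 f' = ?\<Phi>0" using T T_tilde[OF b0 oH hF] by blast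
  have \<Psi>0T: "\<And>n. \<Psi>0 n \<in> Hm C (fst Z n) P0" using \<Psi>0(1) cmT unfolding chom_def by (fastforce simp: Tcx_def)
  have \<Psi>0f: "cp C (\<Psi>0 m) (f' m) = cp C i20 (\<phi> m)" using fun_cong[OF \<Psi>0(2), of m] unfolding ccomp_def by simp
  define ell where "ell = cp C p20 (\<Psi>0 m)"
  have ellT: "ell \<in> Hm C (fst Z m) (fst H m)" unfolding ell_def using cpT[OF oZ bd0(1) oH \<Psi>0T bd0(5)] .
  have ellf: "cp C ell (f' m) = \<phi> m"
  proof -
    have "cp C ell (f' m) = cp C p20 (cp C i20 (\<phi> m))" unfolding ell_def using sym[OF assoc[OF oY oZ bd0(1) oH fT \<Psi>0T bd0(5)]] \<Psi>0f by simp
    also have "\<dots> = \<phi> m" using assoc[OF oY oH bd0(1) oH \<phi>T bd0(3) bd0(5)] bd0(7) idL[OF oY oH \<phi>T] by simp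
    finally show ?thesis .
  qed
  obtain P1 i11 i21 p11 p21 where b1: "isbip C (fst H (m-1)) P1 i11 i21 p11 p21" using bip_ex oH by blast
  note bd1 = bpD[OF b1 oH]
  let ?T1 = "Tcx C P1 i21 p11"
  let ?\<Phi>1 = "\<lambda>n. if n = m - 1 + 1 then cp C (cp C i11 (\<phi> (m-1))) (snd Y (m-1+1)) else if n = m - 1 then cp C i21 (\<phi> (m-1)) else zr C (fst Y n) P1"
  have "?\<Phi>1 \<in> chom C Y ?T1" using T_in[OF b1 oH s(1) \<phi>T] unfolding chom_def by blast
  then obtain \<Psi>1 where \<Psi>1: "\<Psi>1 \<in> chom C Z ?T1" "ccomp C \<Psi>1 f' = ?\<Phi>1" using T T_tilde[OF b1 oH hF] by blast
  have \<Psi>1T: "\<And>n. \<Psi>1 n \<in> Hm C (fst Z n) P1" using \<Psi>1(1) cmT unfolding chom_def by (fastforce simp: Tcx_def)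
  have \<Psi>1f: "cp C (\<Psi>1 (m-1)) (f' (m-1)) = cp C i21 (\<phi> (m-1))" using fun_cong[OF \<Psi>1(2), of "m-1"] unfolding ccomp_def by simp
  have \<Psi>1f': "cp C (\<Psi>1 m) (f' m) = cp C (cp C i11 (\<phi> (m-1))) (snd Y m)" using fun_cong[OF \<Psi>1(2), of m] unfolding ccomp_def by simp
  have \<Psi>1C: "cp C (cp C i21 p11) (\<Psi>1 m) = cp C (\<Psi>1 (m-1)) (snd Z m)"
    using \<Psi>1(1) cmC[of Z ?T1 \<Psi>1 m] unfolding chom_def by (simp add: Tcx_def)
  define \<beta> where "\<beta> = cp C p21 (\<Psi>1 (m-1))"
  define \<gamma> where "\<gamma> = cp C p11 (\<Psi>1 m)"
  have \<beta>T: "\<beta> \<in> Hm C (fst Z (m-1)) (fst H (m-1))" unfolding \<beta>_def using cpT[OF oZ bd1(1) oH \<Psi>1T bd1(5)] .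
  have \<gamma>T: "\<gamma> \<in> Hm C (fst Z m) (fst H (m-1))" unfolding \<gamma>_def using cpT[OF oZ bd1(1) oH \<Psi>1T bd1(4)] .
  have \<beta>f: "cp C \<beta> (f' (m-1)) = \<phi> (m-1)"
  proof -
    have "cp C \<beta> (f' (m-1)) = cp C p21 (cp C i21 (\<phi> (m-1)))" unfolding \<beta>_def using sym[OF assoc[OF oY oZ bd1(1) oH fT \<Psi>1T bd1(5)]] \<Psi>1f by simp
    also have "\<dots> = \<phi> (m-1)" using assoc[OF oY oH bd1(1) oH \<phi>T bd1(3) bd1(5)] bd1(7) idL[OF oY oH \<phi>T] by simp
    finally show ?thesis .
  qed
  have dYm: "snd Y m \<in> Hm C (fst Y m) (fst Y (m-1))" using dY .
  have \<phi>1T: "\<phi> (m-1) \<in> Hm C (fst Y (m-1)) (fst H (m-1))" using \<phi>T .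
  have \<gamma>f: "cp C \<gamma> (f' m) = cp C (\<phi> (m-1)) (snd Y m)"
  proof -
    have i1\<phi>: "cp C i11 (\<phi> (m-1)) \<in> Hm C (fst Y (m-1)) P1" using cpT[OF oY oH bd1(1) \<phi>1T bd1(2)] .
    have "cp C \<gamma> (f' m) = cp C p11 (cp C (cp C i11 (\<phi> (m-1))) (snd Y m))" unfolding \<gamma>_def using sym[OF assoc[OF oY oZ bd1(1) oH fT \<Psi>1T bd1(4)]] \<Psi>1f' by simp
    also have "\<dots> = cp C (cp C p11 (cp C i11 (\<phi> (m-1)))) (snd Y m)" using assoc[OF oY oY bd1(1) oH dYm i1\<phi> bd1(4)] .
    also have "\<dots> = cp C (\<phi> (m-1)) (snd Y m)" using assoc[OF oY oH bd1(1) oH \<phi>1T bd1(2) bd1(4)] bd1(6) idL[OF oY oH \<phi>1T] by simp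
    finally show ?thesis .
  qed
  have \<beta>d: "cp C \<beta> (snd Z m) = \<gamma>"
  proof -
    have "cp C \<beta> (snd Z m) = cp C p21 (cp C (cp C i21 p11) (\<Psi>1 m))" unfolding \<beta>_def using assoc[OF oZ oZ bd1(1) oH dZ \<Psi>1T bd1(5)] \<Psi>1C by simp
    also have "\<dots> = \<gamma>" unfolding \<gamma>_def using assoc[OF oZ bd1(1) bd1(1) oH \<Psi>1T dT[OF b1 oH] bd1(5)] p2d[OF b1 oH] by simp
    finally show ?thesis .
  qed
  have dHell: "cp C (snd H m) ell \<in> Hm C (fst Z m) (fst H (m-1))" using cpT[OF oZ oH oH ellT dH] .
  have eqf: "cp C (cp C (snd H m) ell) (f' m) = cp C \<gamma> (f' m)" using core[OF ellT ellf] \<gamma>f by simp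
  define \<delta> where "\<delta> = ad C (cp C (snd H m) ell) (ng C \<gamma>)"
  have \<delta>T: "\<delta> \<in> Hm C (fst Z m) (fst H (m-1))" unfolding \<delta>_def using adT ngT oZ oH dHell \<gamma>T by blast
  have \<delta>f: "cp C \<delta> (f' m) = zr C (fst Y m) (fst H (m-1))" unfolding \<delta>_def using diff_compR_zero[OF oY oZ oH dHell \<gamma>T fT eqf] .
  have cokm: "is_cokernel C (fst Y m) (fst Z m) (f' m) c (g' m)" using s(6)[of m] D1 unfolding short_exact_def by simp
  have cokm1: "is_cokernel C (fst Y (m-1)) (fst Z (m-1)) (f' (m-1)) c (g' (m-1))" using s(6)[of "m-1"] D1 unfolding short_exact_def by simp
  have gm: "g' m \<in> Hm C (fst Z m) c" using gT[of m] D1 by simp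
  have gm1: "g' (m-1) \<in> Hm C (fst Z (m-1)) c" using gT[of "m-1"] D1 by simp
  have gd: "cp C (g' (m-1)) (snd Z m) = g' m" using cmC[OF s(5), of m] idL[OF oZ c gm] by (simp add: disk_snd)
  have gf1: "cp C (g' (m-1)) (f' (m-1)) = zr C (fst Y (m-1)) c" using ses_gf[OF s(6)[of "m-1"]] D1 by simp
  obtain \<epsilon> where \<epsilon>T: "\<epsilon> \<in> Hm C c (fst H (m-1))" and \<epsilon>g: "cp C \<epsilon> (g' m) = \<delta>" using cokernel_factor[OF cokm oH \<delta>T \<delta>f] by blast
  have \<epsilon>g1: "cp C \<epsilon> (g' (m-1)) \<in> Hm C (fst Z (m-1)) (fst H (m-1))" using cpT[OF oZ c oH gm1 \<epsilon>T] .
  define \<beta>' where "\<beta>' = ad C \<beta> (cp C \<epsilon> (g' (m-1)))"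
  have \<beta>'T: "\<beta>' \<in> Hm C (fst Z (m-1)) (fst H (m-1))" unfolding \<beta>'_def using adT oZ oH \<beta>T \<epsilon>g1 by blast
  have \<beta>'d: "cp C \<beta>' (snd Z m) = cp C (snd H m) ell"
  proof -
    have "cp C \<beta>' (snd Z m) = ad C (cp C \<beta> (snd Z m)) (cp C (cp C \<epsilon> (g' (m-1))) (snd Z m))"
      unfolding \<beta>'_def using distR[OF oZ oZ oH dZ \<beta>T \<epsilon>g1] .
    also have "\<dots> = ad C \<gamma> \<delta>" using \<beta>d assoc[OF oZ oZ c oH dZ gm1 \<epsilon>T] gd \<epsilon>g by simp
    also have "\<dots> = cp C (snd H m) ell" unfolding \<delta>_def using sub_cancel[OF oZ oH dHell \<gamma>T] .
    finally show ?thesis .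
  qed
  have \<beta>'f: "cp C \<beta>' (f' (m-1)) = \<phi> (m-1)"
  proof -
    have "cp C \<beta>' (f' (m-1)) = ad C (cp C \<beta> (f' (m-1))) (cp C (cp C \<epsilon> (g' (m-1))) (f' (m-1)))"
      unfolding \<beta>'_def using distR[OF oY oZ oH fT \<beta>T \<epsilon>g1] .
    also have "\<dots> = ad C (\<phi> (m-1)) (zr C (fst Y (m-1)) (fst H (m-1)))"
      using \<beta>f assoc[OF oY oZ c oH fT gm1 \<epsilon>T] gf1 zr_right[OF oY c oH \<epsilon>T] by simp
    also have "\<dots> = \<phi> (m-1)" using ad_zr[OF oY oH \<phi>1T] .
    finally show ?thesis .
  qed
  define \<psi> where "\<psi> = (\<lambda>n. if n = m then ell else if n = m - 1 then \<beta>' else cp C (\<phi> n) (v n))"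
  have \<psi>T: "\<And>n. \<psi> n \<in> Hm C (fst Z n) (fst H n)" unfolding \<psi>_def using \<beta>'T ellT \<phi>vT by auto
  have \<psi>f: "\<And>n. cp C (\<psi> n) (f' n) = \<phi> n" unfolding \<psi>_def using \<beta>'f ellf \<phi>vf by auto
  have gen: "\<And>n. n \<noteq> m \<Longrightarrow> n \<noteq> m - 1 \<Longrightarrow> cp C (snd H n) (\<psi> n) = cp C (\<psi> (n-1)) (snd Z n)"
  proof -
    fix n assume a: "n \<noteq> m" "n \<noteq> m - 1"
    have vv: "v n \<in> Hm C (fst Z n) (fst Y n)" "cp C (f' n) (v n) = ident C (fst Z n)" using vP[OF a] by auto
    have l: "cp C (cp C (snd H n) (\<psi> n)) (f' n) = cp C (\<phi> (n-1)) (snd Y n)" using core \<psi>T \<psi>f by blast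
    have r: "cp C (cp C (\<psi> (n-1)) (snd Z n)) (f' n) = cp C (\<phi> (n-1)) (snd Y n)" using core2 \<psi>T \<psi>f by blast
    show "cp C (snd H n) (\<psi> n) = cp C (\<psi> (n-1)) (snd Z n)"
      using retr_cancel[OF oY oZ oH vv(1) fT vv(2) cpT[OF oZ oH oH \<psi>T dH] cpT[OF oZ oZ oH dZ \<psi>T]] l r by simp
  qed
  have chain: "chain_map C Z H \<psi>" unfolding chain_map_def
  proof (intro allI conjI)
    fix n
    show "\<psi> n \<in> Hm C (fst Z n) (fst H n)" by (rule \<psi>T)
    show "cp C (snd H n) (\<psi> n) = cp C (\<psi> (n - 1)) (snd Z n)"
    proof (cases "n = m")
      case True
      then show ?thesis using \<beta>'d unfolding \<psi>_def by simp
    next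
      case nm: False
      show ?thesis
      proof (cases "n = m - 1")
        case False
        then show ?thesis using gen nm by auto
      next
        case True
        have dH1: "snd H (m-1) \<in> Hm C (fst H (m-1)) (fst H (m-1-1))" using dH .
        have dZ1: "snd Z (m-1) \<in> Hm C (fst Z (m-1)) (fst Z (m-1-1))" using dZ .
        have xT: "cp C (snd H (m-1)) \<beta>' \<in> Hm C (fst Z (m-1)) (fst H (m-1-1))" using cpT[OF oZ oH oH \<beta>'T dH1] .
        have yT: "cp C (\<psi> (m-1-1)) (snd Z (m-1)) \<in> Hm C (fst Z (m-1)) (fst H (m-1-1))" using cpT[OF oZ oZ oH dZ1 \<psi>T] .
        have fx: "cp C (cp C (snd H (m-1)) \<beta>') (f' (m-1)) = cp C (\<phi> (m-1-1)) (snd Y (m-1))" using core[OF \<beta>'T \<beta>'f] .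
        have fy: "cp C (cp C (\<psi> (m-1-1)) (snd Z (m-1))) (f' (m-1)) = cp C (\<phi> (m-1-1)) (snd Y (m-1))" using core2[OF \<psi>T \<psi>f] .
        have rx: "cp C (cp C (snd H (m-1)) \<beta>') (snd Z m) = zr C (fst Z m) (fst H (m-1-1))"
        proof -
          have "cp C (cp C (snd H (m-1)) \<beta>') (snd Z m) = cp C (snd H (m-1)) (cp C (snd H m) ell)"
            using assoc[OF oZ oZ oH oH dZ \<beta>'T dH1] \<beta>'d by simp
          also have "\<dots> = cp C (cp C (snd H (m-1)) (snd H m)) ell" using assoc[OF oZ oH oH oH ellT dH dH1] .
          also have "\<dots> = zr C (fst Z m) (fst H (m-1-1))" using cxdd[OF hc, of m] zr_left[OF oZ oH oH ellT] by (simp add: diff_diff_eq)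
          finally show ?thesis .
        qed
        have ry: "cp C (cp C (\<psi> (m-1-1)) (snd Z (m-1))) (snd Z m) = zr C (fst Z m) (fst H (m-1-1))"
        proof -
          have "cp C (cp C (\<psi> (m-1-1)) (snd Z (m-1))) (snd Z m) = cp C (\<psi> (m-1-1)) (cp C (snd Z (m-1)) (snd Z m))"
            using assoc[OF oZ oZ oZ oH dZ dZ1 \<psi>T] by simp
          also have "\<dots> = zr C (fst Z m) (fst H (m-1-1))" using cxdd[OF s(2), of m] zr_right[OF oZ oZ oH \<psi>T] by (simp add: diff_diff_eq)
          finally show ?thesis .
        qed
        have ep: "is_epi C (fst Z m) c (cp C (g' (m-1)) (snd Z m))" using gd ses_epi[OF s(6)[of m]] D1 by simp
        have "cp C (snd H (m-1)) \<beta>' = cp C (\<psi> (m-1-1)) (snd Z (m-1))"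
          using kpair_co[OF cokm1 oY oZ c oZ oH gm1 fT dZ ep xT yT] fx fy rx ry by simp
        then show ?thesis using True nm unfolding \<psi>_def by simp
      qed
    qed
  qed
  have "ccomp C \<psi> f' = \<phi>" unfolding ccomp_def using \<psi>f by auto
  then show "\<exists>\<psi>\<in>chom C Z H. ccomp C \<psi> f' = \<phi>" using chain unfolding chom_def by blast
qed

end


lemma gen_equiv:
  assumes "\<And>H. H \<in> B \<Longrightarrow> H \<in> A" and "\<And>H. H \<in> A \<Longrightarrow> Q H = P H"
    and "\<And>H. H \<in> A \<Longrightarrow> \<forall>H\<in>B. P H \<Longrightarrow> P H"
  shows "(\<forall>H\<in>A. Q H) \<longleftrightarrow> (\<forall>H\<in>B. Q H)"
  using assms by metis

theorem proposition4p4: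
  fixes C :: "('o,'m) abcat" and \<F> \<G> :: "'o set" and m :: int and c :: 'o
    and Z X Y :: "('o,'m) cx" and f g f' g' :: "int \<Rightarrow> 'm"
  assumes "abelian C"
    and "\<F> \<subseteq> Ob C" and "\<G> \<subseteq> Ob C"
    and "closed_ext C \<F>" and "closed_ext C \<G>"
    and "c \<in> Ob C"
    and S: "ses_ch C (disk C (m + 1) c) Z X f g"
    and S': "ses_ch C Y Z (disk C m c) f' g'"
  shows "(Hom_cov_exact C (dwtilde C \<F>) (disk C (m + 1) c) Z X f g \<longleftrightarrow>
            Hom_cov_exact C (tilde C \<F>) (disk C (m + 1) c) Z X f g) \<and>
         (Hom_contra_exact C (dwtilde C \<G>) (disk C (m + 1) c) Z X f g \<longleftrightarrow>
            Hom_contra_exact C (tilde C \<G>) (disk C (m + 1) c) Z X f g) \<and>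
         (Hom_cov_exact C (dwtilde C \<F>) Y Z (disk C m c) f' g' \<longleftrightarrow>
            Hom_cov_exact C (tilde C \<F>) Y Z (disk C m c) f' g') \<and>
         (Hom_contra_exact C (dwtilde C \<G>) Y Z (disk C m c) f' g' \<longleftrightarrow>
            Hom_contra_exact C (tilde C \<G>) Y Z (disk C m c) f' g')"
proof -
  interpret ab C by unfold_locales (rule assms(1))
  have cxd: "\<And>H K. H \<in> dwtilde C K \<Longrightarrow> is_complex C H" unfolding dwtilde_def by blast
  have sF: "\<And>H. H \<in> tilde C \<F> \<Longrightarrow> H \<in> dwtilde C \<F>" using tilde_sub assms(2,4) by blast
  have sG: "\<And>H. H \<in> tilde C \<G> \<Longrightarrow> H \<in> dwtilde C \<G>" using tilde_sub assms(3,5) by blast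
  have 1: "Hom_cov_exact C (dwtilde C \<F>) (disk C (m + 1) c) Z X f g \<longleftrightarrow>
            Hom_cov_exact C (tilde C \<F>) (disk C (m + 1) c) Z X f g"
    unfolding Hom_cov_exact_def
    by (rule gen_equiv[where P = "\<lambda>H. \<forall>\<phi>\<in>chom C H X. \<exists>\<psi>\<in>chom C H Z. ccomp C g \<psi> = \<phi>"], erule sF, erule cov_iff[OF S cxd], erule (1) part1[OF assms(2,6) S, rotated])
  have 2: "Hom_contra_exact C (dwtilde C \<G>) (disk C (m + 1) c) Z X f g \<longleftrightarrow>
            Hom_contra_exact C (tilde C \<G>) (disk C (m + 1) c) Z X f g"
    unfolding Hom_contra_exact_def
    by (rule gen_equiv[where P = "\<lambda>H. \<forall>\<phi>\<in>chom C (disk C (m + 1) c) H. \<exists>\<psi>\<in>chom C Z H. ccomp C \<psi> f = \<phi>"], erule sG, erule contra_iff[OF S cxd], erule (1) part2[OF assms(3,6) S, rotated])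
  have 3: "Hom_cov_exact C (dwtilde C \<F>) Y Z (disk C m c) f' g' \<longleftrightarrow>
            Hom_cov_exact C (tilde C \<F>) Y Z (disk C m c) f' g'"
    unfolding Hom_cov_exact_def
    by (rule gen_equiv[where P = "\<lambda>H. \<forall>\<phi>\<in>chom C H (disk C m c). \<exists>\<psi>\<in>chom C H Z. ccomp C g' \<psi> = \<phi>"], erule sF, erule cov_iff[OF S' cxd], erule (1) part3[OF assms(2,6) S', rotated])
  have 4: "Hom_contra_exact C (dwtilde C \<G>) Y Z (disk C m c) f' g' \<longleftrightarrow>
            Hom_contra_exact C (tilde C \<G>) Y Z (disk C m c) f' g'"
    unfolding Hom_contra_exact_def
    by (rule gen_equiv[where P = "\<lambda>H. \<forall>\<phi>\<in>chom C Y H. \<exists>\<psi>\<in>chom C Z H. ccomp C \<psi> f' = \<phi>"], erule sG, erule contra_iff[OF S' cxd], erule (1) part4[OF assms(3,6) S', rotated])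
  show ?thesis using 1 2 3 4 by blast
qed



end
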